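(* Let $m\ge 2$ and consider the system $$\frac{du_i}{dt}=-a_iu_i+\sum_{j=1}^m w_{ij}f_j(u_j)+k\,\varphi_i(\rho)\,u_i+J_i-P\,u_i\sum_{j=1}^m\Gamma(u_j),\quad 1\le i\le m,\qquad \frac{d\rho}{dt}=\sum_{i=1}^m\gamma_iu_i-b\rho,$$ where $\Gamma(s)=\dfrac{1}{1+\exp[-r(s-V)]}$ with $r>0$, $V\in\mathbb{R}$, $P>0$; $a_i,b,\beta,\eta_i,k>0$; $w_{ij},J_i,\gamma_i\in\mathbb{R}$; $f_i,\varphi_i$ locally Lipschitz with $a_i>k$, $|f_i(s)|\le\beta$, $\varphi_i(s)=1-\eta_is^2$ for all $s\in\mathbb{R}$, $1\le i\le m$. Let $\{S(t)\}_{t\ge0}$ be the solution semiflow on $\mathbb{R}^{m+1}$, $S(t)g^0=g(t;g^0)$, with norm $\|g\|^2=\sum_{i=1}^m u_i^2+\rho^2$. Set $a=\min_i a_i$, $W=\max_{i,j}|w_{ij}|$, $J=\max_i|J_i|$, $\gamma^2=\max_i\gamma_i^2$, $$C_1=\frac{1}{a-k}\Big(\frac{m\gamma^2}{b}+b\Big),\quad C_2=\Big(\frac{m\gamma^2}{b}+b\Big)\frac{m(mW\beta+J)^2}{(a-k)^2},\quad \mu=b\min\Big\{\frac1{C_1},1\Big\},\quad Q=1+\frac{C_2}{\mu\min\{C_1,1\}}.$$ Then the ball $B^*=\{g\in\mathbb{R}^{m+1}:\|g\|^2\le Q\}$ is an absorbing set for $\{S(t)\}_{t\ge0}$: for every bounded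 set $B\subset\mathbb{R}^{m+1}$ there is a finite $T_B\ge0$ with $S(t)B\subset B^*$ for all $t>T_B$. Moreover, this semiflow has a global attractor.
   Context: The constant $Q$ is independent of the initial state. A global attractor is a compact invariant set attracting all bounded sets; here it is the $\Omega$-limit set of $B^*$. *)

theory Defs
  imports "HOL-Analysis.Analysis"
begin

definition Gam :: "real \<Rightarrow> real \<Rightarrow> real \<Rightarrow> real" where
  "Gam r V s = 1 / (1 + exp (- r * (s - V)))"

definition loc_lipschitz :: "(real \<Rightarrow> real) \<Rightarrow> bool" where
  "loc_lipschitz h \<longleftrightarrow>
     (\<forall>x. \<exists>e>0. \<exists>L. \<forall>y\<in>cball x e. \<forall>z\<in>cball x e. \<bar>h y - h z\<bar> \<le> L * \<bar>y - z\<bar>)"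

text \<open>The vector field of the system on R^(m+1) = (real^'n) x real, m = CARD('n).
  State g = (u, rho).\<close>
definition nn_field ::
  "real^'n \<Rightarrow> real^'n^'n \<Rightarrow> ('n::finite \<Rightarrow> real \<Rightarrow> real) \<Rightarrow> real \<Rightarrow>
   ('n \<Rightarrow> real \<Rightarrow> real) \<Rightarrow> real^'n \<Rightarrow> real \<Rightarrow> real \<Rightarrow> real \<Rightarrow> real^'n \<Rightarrow> real \<Rightarrow>
   (real^'n) \<times> real \<Rightarrow> (real^'n) \<times> real" where
  "nn_field a w f k \<phi> J P r V \<gamma> b g =
    (let u = fst g; \<rho> = snd g in
     ((\<chi> i. - a$i * u$i + (\<Sum>j\<in>UNIV. w$i$j * f j (u$j)) + k * \<phi> i \<rho> * u$i + J$i
             - P * u$i * (\<Sum>j\<in>UNIV. Gam r V (u$j))),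
      (\<Sum>i\<in>UNIV. \<gamma>$i * u$i) - b * \<rho>))"

definition is_solution ::
  "('a::real_normed_vector \<Rightarrow> 'a) \<Rightarrow> 'a \<Rightarrow> (real \<Rightarrow> 'a) \<Rightarrow> bool" where
  "is_solution F x0 g \<longleftrightarrow> g 0 = x0 \<and>
     (\<forall>t\<ge>0. (g has_vector_derivative F (g t)) (at t within {0..}))"

definition semiflow :: "('a::real_normed_vector \<Rightarrow> 'a) \<Rightarrow> real \<Rightarrow> 'a \<Rightarrow> 'a" where
  "semiflow F t x0 = (THE y. \<exists>g. is_solution F x0 g \<and> g t = y)"

definition global_attractor :: "(real \<Rightarrow> 'a::metric_space \<Rightarrow> 'a) \<Rightarrow> 'a set \<Rightarrow> bool" where
  "global_attractor S A \<longleftrightarrow> A \<noteq> {} \<and> compact A \<and> (\<forall>t\<ge>0. S t ` A = A) \<and>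
     (\<forall>B. bounded B \<longrightarrow>
        (\<forall>e>0. \<exists>T\<ge>0. \<forall>t\<ge>T. \<forall>x\<in>B. infdist (S t x) A < e))"

end

theory Submission
  imports Defs
begin

definition lipb :: "('a::real_normed_vector \<Rightarrow> 'b::real_normed_vector) \<Rightarrow> bool" where
  "lipb h \<longleftrightarrow> (\<forall>R. \<exists>L\<ge>0. \<forall>x y. norm x \<le> R \<longrightarrow> norm y \<le> R \<longrightarrow> norm (h x - h y) \<le> L * norm (x - y))"

lemma lipbD:
  assumes "lipb h" obtains L where "L \<ge> 0" "\<And>x y. norm x \<le> R \<Longrightarrow> norm y \<le> R \<Longrightarrow> norm (h x - h y) \<le> L * norm (x - y)"
  using assms unfolding lipb_def by blast

lemma lipb_bounded:
  assumes "lipb h" obtains M where "\<And>x. norm x \<le> R \<Longrightarrow> norm (h x) \<le> M"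
proof -
  obtain L where L: "L \<ge> 0" "\<And>x y. norm x \<le> max R 0 \<Longrightarrow> norm y \<le> max R 0 \<Longrightarrow> norm (h x - h y) \<le> L * norm (x - y)"
    using assms by (rule lipbD[where R="max R 0"]) auto
  have "norm (h x) \<le> norm (h 0) + L * max R 0" if "norm x \<le> R" for x
  proof -
    have "norm (h x - h 0) \<le> L * norm x" using L(2)[of x 0] that by simp
    also have "\<dots> \<le> L * max R 0" using that L(1) by (intro mult_left_mono) auto
    finally show ?thesis using norm_triangle_ineq2[of "h x" "h 0"] by simp
  qed
  then show ?thesis using that by blast
qed

lemma lipb_const: "lipb (\<lambda>x. c)"
  unfolding lipb_def by (auto intro!: exI[of _ 0])

lemma lipb_bl: "bounded_linear h \<Longrightarrow> lipb h"
proof -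
  assume "bounded_linear h"
  then obtain K where K: "K > 0" "\<And>x. norm (h x) \<le> norm x * K"
    using bounded_linear.pos_bounded by blast
  have "norm (h x - h y) \<le> K * norm (x - y)" for x y
    using K(2)[of "x - y"] \<open>bounded_linear h\<close> by (simp add: linear_diff bounded_linear.linear mult.commute)
  then show "lipb h" unfolding lipb_def using K(1) by (auto intro!: exI[of _ K])
qed

lemma lipb_add:
  fixes f g :: "'a::real_normed_vector \<Rightarrow> 'b::real_normed_vector"
  shows "lipb f \<Longrightarrow> lipb g \<Longrightarrow> lipb (\<lambda>x. f x + g x)"
  unfolding lipb_def
proof (intro allI)
  fix R assume f: "\<forall>R. \<exists>L\<ge>0. \<forall>x y. norm x \<le> R \<longrightarrow> norm y \<le> R \<longrightarrow> norm (f x - f y) \<le> L * norm (x - y)"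
    and g: "\<forall>R. \<exists>L\<ge>0. \<forall>x y. norm x \<le> R \<longrightarrow> norm y \<le> R \<longrightarrow> norm (g x - g y) \<le> L * norm (x - y)"
  obtain L1 where L1: "L1 \<ge> 0" "\<forall>x y. norm x \<le> R \<longrightarrow> norm y \<le> R \<longrightarrow> norm (f x - f y) \<le> L1 * norm (x - y)" using f by blast
  obtain L2 where L2: "L2 \<ge> 0" "\<forall>x y. norm x \<le> R \<longrightarrow> norm y \<le> R \<longrightarrow> norm (g x - g y) \<le> L2 * norm (x - y)" using g by blast
  show "\<exists>L\<ge>0. \<forall>x y. norm x \<le> R \<longrightarrow> norm y \<le> R \<longrightarrow> norm (f x + g x - (f y + g y)) \<le> L * norm (x - y)"
  proof (intro exI[of _ "L1 + L2"] conjI allI impI)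
    fix x y :: 'a assume xy: "norm x \<le> R" "norm y \<le> R"
    have "norm (f x + g x - (f y + g y)) \<le> norm (f x - f y) + norm (g x - g y)"
      by (metis add_diff_add norm_triangle_ineq)
    also have "\<dots> \<le> (L1 + L2) * norm (x - y)" using L1 L2 xy by (simp add: distrib_right add_mono)
    finally show "norm (f x + g x - (f y + g y)) \<le> (L1 + L2) * norm (x - y)" .
  qed (use L1 L2 in auto)
qed

lemma lipb_minus: "lipb f \<Longrightarrow> lipb (\<lambda>x. - f x)"
  proof -
  have "norm (- f x - - f y) = norm (f x - f y)" for x y by (simp add: norm_minus_commute)
  then show "lipb f \<Longrightarrow> lipb (\<lambda>x. - f x)" unfolding lipb_def by simp
qed

lemma lipb_diff: "lipb f \<Longrightarrow> lipb g \<Longrightarrow> lipb (\<lambda>x. f x - g x)"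
  using lipb_add[of f "\<lambda>x. - g x"] lipb_minus[of g] by simp

lemma lipb_comp:
  fixes g :: "'b::real_normed_vector \<Rightarrow> 'c::real_normed_vector" and h :: "'a::real_normed_vector \<Rightarrow> 'b"
  shows "lipb g \<Longrightarrow> lipb h \<Longrightarrow> lipb (\<lambda>x. g (h x))"
proof -
  assume g: "lipb g" and h: "lipb h"
  show "lipb (\<lambda>x. g (h x))" unfolding lipb_def
  proof
    fix R
    obtain M where M: "\<And>x. norm x \<le> R \<Longrightarrow> norm (h x) \<le> M" using h by (rule lipb_bounded[where R=R]) auto
    obtain L1 where L1: "L1 \<ge> 0" "\<And>x y. norm x \<le> R \<Longrightarrow> norm y \<le> R \<Longrightarrow> norm (h x - h y) \<le> L1 * norm (x - y)"
      using h by (rule lipbD[where R=R]) auto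
    obtain L2 where L2: "L2 \<ge> 0" "\<And>x y. norm x \<le> M \<Longrightarrow> norm y \<le> M \<Longrightarrow> norm (g x - g y) \<le> L2 * norm (x - y)"
      using g by (rule lipbD[where R=M]) auto
    show "\<exists>L\<ge>0. \<forall>x y. norm x \<le> R \<longrightarrow> norm y \<le> R \<longrightarrow> norm (g (h x) - g (h y)) \<le> L * norm (x - y)"
    proof (intro exI[of _ "L2 * L1"] conjI allI impI)
      fix x y :: 'a assume xy: "norm x \<le> R" "norm y \<le> R"
      have "norm (g (h x) - g (h y)) \<le> L2 * norm (h x - h y)" using L2 M xy by blast
      also have "\<dots> \<le> L2 * (L1 * norm (x - y))" using L1 L2 xy by (intro mult_left_mono) auto
      finally show "norm (g (h x) - g (h y)) \<le> L2 * L1 * norm (x - y)" by (simp add: mult.assoc)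
    qed (use L1 L2 in auto)
  qed
qed

lemma lipb_mult:
  fixes f g :: "'a::real_normed_vector \<Rightarrow> real"
  shows "lipb f \<Longrightarrow> lipb g \<Longrightarrow> lipb (\<lambda>x. f x * g x)"
proof -
  assume f: "lipb f" and g: "lipb g"
  show "lipb (\<lambda>x. f x * g x)" unfolding lipb_def
  proof
    fix R
    obtain M1 where M1: "\<And>x. norm x \<le> R \<Longrightarrow> norm (f x) \<le> M1" using f by (rule lipb_bounded[where R=R]) auto
    obtain M2 where M2: "\<And>x. norm x \<le> R \<Longrightarrow> norm (g x) \<le> M2" using g by (rule lipb_bounded[where R=R]) auto
    obtain L1 where L1: "L1 \<ge> 0" "\<And>x y. norm x \<le> R \<Longrightarrow> norm y \<le> R \<Longrightarrow> norm (f x - f y) \<le> L1 * norm (x - y)"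
      using f by (rule lipbD[where R=R]) auto
    obtain L2 where L2: "L2 \<ge> 0" "\<And>x y. norm x \<le> R \<Longrightarrow> norm y \<le> R \<Longrightarrow> norm (g x - g y) \<le> L2 * norm (x - y)"
      using g by (rule lipbD[where R=R]) auto
    show "\<exists>L\<ge>0. \<forall>x y. norm x \<le> R \<longrightarrow> norm y \<le> R \<longrightarrow> norm (f x * g x - f y * g y) \<le> L * norm (x - y)"
    proof (intro exI[of _ "\<bar>M1\<bar> * L2 + \<bar>M2\<bar> * L1"] conjI allI impI)
      fix x y :: 'a assume xy: "norm x \<le> R" "norm y \<le> R"
      have e: "f x * g x - f y * g y = f x * (g x - g y) + g y * (f x - f y)" by algebra
      have 1: "\<bar>f x * (g x - g y)\<bar> \<le> \<bar>M1\<bar> * (L2 * norm (x - y))"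
        unfolding abs_mult using M1[OF xy(1)] L2(2)[OF xy] by (intro mult_mono) auto
      have 2: "\<bar>g y * (f x - f y)\<bar> \<le> \<bar>M2\<bar> * (L1 * norm (x - y))"
        unfolding abs_mult using M2[OF xy(2)] L1(2)[OF xy] by (intro mult_mono) auto
      have "norm (f x * g x - f y * g y) = \<bar>f x * (g x - g y) + g y * (f x - f y)\<bar>"
        unfolding e by simp
      also have "\<dots> \<le> \<bar>f x * (g x - g y)\<bar> + \<bar>g y * (f x - f y)\<bar>" by (rule abs_triangle_ineq)
      also have "\<dots> \<le> \<bar>M1\<bar> * (L2 * norm (x - y)) + \<bar>M2\<bar> * (L1 * norm (x - y))" using 1 2 by (rule add_mono)
      also have "\<dots> = (\<bar>M1\<bar> * L2 + \<bar>M2\<bar> * L1) * norm (x - y)" by (simp add: algebra_simps)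
      finally show "norm (f x * g x - f y * g y) \<le> (\<bar>M1\<bar> * L2 + \<bar>M2\<bar> * L1) * norm (x - y)" .
    qed (use L1 L2 in auto)
  qed
qed

lemma lipb_sum:
  assumes "\<And>j. lipb (f j)"
  shows "lipb (\<lambda>x. \<Sum>j\<in>A. f j x)"
proof (cases "finite A")
  case True
  then show ?thesis
  proof (induction A rule: finite_induct)
    case (insert a A)
    have "lipb (\<lambda>x. f a x + (\<Sum>j\<in>A. f j x))" using lipb_add[OF assms insert.IH] .
    then show ?case using insert.hyps by simp
  qed (simp add: lipb_const)
qed (simp add: lipb_const)

lemma lipb_pair: "lipb f \<Longrightarrow> lipb g \<Longrightarrow> lipb (\<lambda>x. (f x, g x))"
proof -
  have e: "(\<lambda>x. (f x, g x)) = (\<lambda>x. (\<lambda>v. (v, 0)) (f x) + (\<lambda>v. (0, v)) (g x))" by auto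
  assume "lipb f" "lipb g"
  then show ?thesis unfolding e
    by (intro lipb_add lipb_comp[OF lipb_bl[OF bounded_linear_Pair[OF bounded_linear_ident bounded_linear_zero]]]
      lipb_comp[OF lipb_bl[OF bounded_linear_Pair[OF bounded_linear_zero bounded_linear_ident]]])
qed

lemma lipb_vec:
  fixes h :: "'a::real_normed_vector \<Rightarrow> real^'n"
  assumes "\<And>i. lipb (\<lambda>x. h x $ i)"
  shows "lipb h"
proof -
  have e: "h = (\<lambda>x. \<Sum>i\<in>UNIV. h x $ i *\<^sub>R axis i 1)"
  proof (rule ext)
    fix x show "h x = (\<Sum>i\<in>UNIV. h x $ i *\<^sub>R axis i 1)"
      using basis_expansion[of "h x", symmetric] by (simp add: scalar_mult_eq_scaleR)
  qed
  have bl: "bounded_linear (\<lambda>t::real. t *\<^sub>R axis i (1::real))" for i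
    by (intro bounded_linear_scaleR_left)
  show ?thesis
    apply (subst e)
    apply (rule lipb_sum)
    apply (rule lipb_comp[OF lipb_bl[OF bl]])
    apply (rule assms)
    done
qed


lemma lipb_id: "lipb (\<lambda>x. x)"
  by (rule lipb_bl) (rule bounded_linear_ident)

lemma loc_lipschitz_lipb:
  assumes "loc_lipschitz h"
  shows "lipb h"
proof -
  have ll: "local_lipschitz {0::real} X (\<lambda>_. h)" for X
    unfolding local_lipschitz_def
  proof (intro ballI)
    fix x :: real and t :: real
    obtain e L where e: "e > 0" and L: "\<forall>y\<in>cball x e. \<forall>z\<in>cball x e. \<bar>h y - h z\<bar> \<le> L * \<bar>y - z\<bar>"
      using assms unfolding loc_lipschitz_def by blast
    have "(max L 0)-lipschitz_on (cball x e \<inter> X) h"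
    proof (rule lipschitz_onI)
      fix y z assume "y \<in> cball x e \<inter> X" "z \<in> cball x e \<inter> X"
      then have "\<bar>h y - h z\<bar> \<le> L * \<bar>y - z\<bar>" using L by auto
      also have "\<dots> \<le> max L 0 * \<bar>y - z\<bar>" by (intro mult_right_mono) auto
      finally show "dist (h y) (h z) \<le> max L 0 * dist y z" by (simp add: dist_real_def)
    qed auto
    then show "\<exists>u>0. \<exists>L. \<forall>t\<in>cball t u \<inter> {0}. L-lipschitz_on (cball x u \<inter> X) h"
      using e by blast
  qed
  show ?thesis unfolding lipb_def
  proof
    fix R
    obtain L where L: "\<And>t. t \<in> {0::real} \<Longrightarrow> L-lipschitz_on (cball 0 R) h"
      using local_lipschitz_compact_implies_lipschitz[OF ll[of "cball 0 R"]] by auto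
    then have L': "L-lipschitz_on (cball 0 R) h" by auto
    show "\<exists>L\<ge>0. \<forall>x y. norm x \<le> R \<longrightarrow> norm y \<le> R \<longrightarrow> norm (h x - h y) \<le> L * norm (x - y)"
      using L' lipschitz_on_nonneg[OF L'] lipschitz_onD[OF L']
      by (intro exI[of _ L]) (auto simp: dist_real_def)
  qed
qed

lemma lipb_real_deriv:
  fixes h :: "real \<Rightarrow> real"
  assumes d: "\<And>x. (h has_real_derivative h' x) (at x)" and c: "continuous_on UNIV h'"
  shows "lipb h"
  unfolding lipb_def
proof
  fix R
  have "compact (h' ` cball 0 R)"
    by (intro compact_continuous_image continuous_on_subset[OF c]) auto
  then have "bounded (h' ` cball 0 R)" by (rule compact_imp_bounded)
  then obtain B where B0: "\<forall>y\<in>h' ` cball 0 R. norm y \<le> B"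
    unfolding bounded_iff by (elim exE) (rule that)
  then have B: "\<And>x. x \<in> cball 0 R \<Longrightarrow> \<bar>h' x\<bar> \<le> B" by auto
  have key: "\<bar>h x - h y\<bar> \<le> \<bar>B\<bar> * \<bar>x - y\<bar>" if "\<bar>x\<bar> \<le> R" "\<bar>y\<bar> \<le> R" "x < y" for x y
  proof -
    obtain z where z: "x < z" "z < y" "h y - h x = (y - x) * h' z"
      using MVT2[OF \<open>x < y\<close> d] by blast
    have "\<bar>z\<bar> \<le> R" using z that by auto
    then have "\<bar>h' z\<bar> \<le> \<bar>B\<bar>" using B[of z] by auto
    then have "\<bar>h y - h x\<bar> \<le> \<bar>y - x\<bar> * \<bar>B\<bar>" unfolding z(3) abs_mult by (intro mult_left_mono) auto
    then show ?thesis by (simp add: abs_minus_commute mult.commute)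
  qed
  show "\<exists>L\<ge>0. \<forall>x y. norm x \<le> R \<longrightarrow> norm y \<le> R \<longrightarrow> norm (h x - h y) \<le> L * norm (x - y)"
  proof (intro exI[of _ "\<bar>B\<bar>"] conjI allI impI)
    fix x y :: real assume "norm x \<le> R" "norm y \<le> R"
    then show "norm (h x - h y) \<le> \<bar>B\<bar> * norm (x - y)"
      using key[of x y] key[of y x] by (cases x y rule: linorder_cases) (auto simp: abs_minus_commute)
  qed auto
qed

lemma lipb_exp: "lipb (exp :: real \<Rightarrow> real)"
  by (rule lipb_real_deriv[of _ exp]) (auto intro: DERIV_exp continuous_on_exp continuous_on_id)

lemma lipb_inv1:
  fixes h :: "'a::real_normed_vector \<Rightarrow> real"
  assumes "lipb h" "\<And>x. h x \<ge> 1"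
  shows "lipb (\<lambda>x. 1 / h x)"
  unfolding lipb_def
proof
  fix R
  obtain L where L: "L \<ge> 0" "\<And>x y. norm x \<le> R \<Longrightarrow> norm y \<le> R \<Longrightarrow> norm (h x - h y) \<le> L * norm (x - y)"
    using assms(1) by (rule lipbD[where R=R]) auto
  have "\<bar>1 / h x - 1 / h y\<bar> \<le> \<bar>h x - h y\<bar>" for x y
  proof -
    have p: "h x \<ge> 1" "h y \<ge> 1" using assms(2) by auto
    have "1 / h x - 1 / h y = (h y - h x) / (h x * h y)" using p by (simp add: field_simps)
    also have "\<bar>\<dots>\<bar> = \<bar>h x - h y\<bar> / (h x * h y)" using p by (simp add: abs_minus_commute)
    also have "\<dots> \<le> \<bar>h x - h y\<bar>" using p by (simp add: divide_le_eq) (smt (verit) mult_le_cancel_left1 mult_mono)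
    finally show ?thesis .
  qed
  note a = this
  show "\<exists>L\<ge>0. \<forall>x y. norm x \<le> R \<longrightarrow> norm y \<le> R \<longrightarrow> norm (1 / h x - 1 / h y) \<le> L * norm (x - y)"
  proof (intro exI[of _ L] conjI allI impI)
    fix x y :: 'a assume "norm x \<le> R" "norm y \<le> R"
    then have "norm (h x - h y) \<le> L * norm (x - y)" by (rule L(2))
    then show "norm (1 / h x - 1 / h y) \<le> L * norm (x - y)" using a[of x y] by simp
  qed (rule L(1))
qed

lemma lipb_Gam: "lipb (Gam r V)"
proof -
  have e: "Gam r V = (\<lambda>s. 1 / (1 + exp (- r * (s - V))))" by (auto simp: Gam_def fun_eq_iff)
  have "lipb (\<lambda>s::real. 1 + exp (- r * (s - V)))"
    by (intro lipb_add lipb_const lipb_comp[OF lipb_exp] lipb_mult lipb_diff lipb_id)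
  moreover have "1 + exp (- r * (s - V)) \<ge> 1" for s by (smt (verit) exp_gt_zero)
  ultimately show ?thesis unfolding e by (rule lipb_inv1)
qed


lemma lipb_field:
  fixes a :: "real^'n::finite" and w :: "real^'n^'n"
  assumes f_lip: "\<forall>i. loc_lipschitz (f i)" and phi_lip: "\<forall>i. loc_lipschitz (\<phi> i)"
  shows "lipb (nn_field a w f k \<phi> J P r V \<gamma> b)"
proof -
  have lc: "lipb (\<lambda>g::(real^'n)\<times>real. fst g $ j)" for j
    by (rule lipb_comp[OF lipb_bl lipb_bl]) (auto intro: bounded_linear_vec_nth bounded_linear_fst)
  have ls: "lipb (\<lambda>g::(real^'n)\<times>real. snd g)"
    by (rule lipb_bl) (rule bounded_linear_snd)
  have fj: "lipb (\<lambda>g::(real^'n)\<times>real. f j (fst g $ j))" for j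
    by (rule lipb_comp[OF loc_lipschitz_lipb lc]) (use f_lip in auto)
  have phi: "lipb (\<lambda>g::(real^'n)\<times>real. \<phi> j (snd g))" for j
    by (rule lipb_comp[OF loc_lipschitz_lipb ls]) (use phi_lip in auto)
  have gam: "lipb (\<lambda>g::(real^'n)\<times>real. Gam r V (fst g $ j))" for j
    by (rule lipb_comp[OF lipb_Gam lc])
  show ?thesis
    unfolding nn_field_def Let_def
    apply (rule lipb_pair)
     apply (rule lipb_vec)
     apply (simp only: vec_lambda_beta)
     apply (intro lipb_add lipb_diff lipb_mult lipb_const lipb_sum lipb_minus lc ls fj phi gam)
    apply (intro lipb_add lipb_diff lipb_mult lipb_const lipb_sum lipb_minus lc ls fj phi gam)
    done
qed


lemma mono_deriv_nonpos:
  fixes \<psi> :: "real \<Rightarrow> real"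
  assumes d: "\<And>\<tau>. 0 \<le> \<tau> \<Longrightarrow> \<tau> \<le> T \<Longrightarrow> (\<psi> has_real_derivative \<psi>' \<tau>) (at \<tau> within {0..})"
    and np: "\<And>\<tau>. 0 \<le> \<tau> \<Longrightarrow> \<tau> \<le> T \<Longrightarrow> \<psi>' \<tau> \<le> 0"
    and t: "0 \<le> t" "t \<le> T"
  shows "\<psi> t \<le> \<psi> 0"
proof (cases "t = 0")
  case False
  then have tp: "0 < t" using t by auto
  have cont: "continuous_on {0..t} \<psi>"
    unfolding continuous_on_eq_continuous_within
  proof
    fix x assume x: "x \<in> {0..t}"
    have "(\<psi> has_real_derivative \<psi>' x) (at x within {0..t})"
      by (rule DERIV_subset[OF d]) (use x t in auto)
    then show "continuous (at x within {0..t}) \<psi>" by (rule DERIV_continuous)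
  qed
  have dat: "(\<psi> has_real_derivative \<psi>' x) (at x)" if "0 < x" "x < t" for x
  proof -
    have "at x within {0..} = at x" by (rule at_within_interior) (use that in simp)
    then show ?thesis using d[of x] that t by auto
  qed
  have "\<psi> differentiable at x" if "0 < x" "x < t" for x
    using dat[OF that] by (auto simp: real_differentiable_def)
  then obtain l z where z: "0 < z" "z < t" "(\<psi> has_real_derivative l) (at z)" "\<psi> t - \<psi> 0 = (t - 0) * l"
    using MVT[OF tp cont] by blast
  have "l = \<psi>' z" using DERIV_unique[OF z(3) dat[OF z(1,2)]] .
  then have "l \<le> 0" using np[of z] z t by auto
  then have "t * l \<le> 0" using tp by (simp add: mult_nonneg_nonpos)
  then show ?thesis using z(4) by simp
qed simp

lemma lin_ineq:
  fixes h :: "real \<Rightarrow> real"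
  assumes d: "\<And>\<tau>. 0 \<le> \<tau> \<Longrightarrow> \<tau> \<le> T \<Longrightarrow> (h has_real_derivative h' \<tau>) (at \<tau> within {0..})"
    and le: "\<And>\<tau>. 0 \<le> \<tau> \<Longrightarrow> \<tau> \<le> T \<Longrightarrow> h' \<tau> \<le> c * h \<tau> + e"
    and c: "c \<noteq> 0" and t: "0 \<le> t" "t \<le> T"
  shows "h t + e / c \<le> (h 0 + e / c) * exp (c * t)"
proof -
  define \<psi> where "\<psi> \<tau> = (h \<tau> + e / c) * exp (- c * \<tau>)" for \<tau>
  define \<psi>' where "\<psi>' \<tau> = (h' \<tau> - c * h \<tau> - e) * exp (- c * \<tau>)" for \<tau>
  have "(\<psi> has_real_derivative \<psi>' \<tau>) (at \<tau> within {0..})" if "0 \<le> \<tau>" "\<tau> \<le> T" for \<tau>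
  proof -
    have "((\<lambda>\<tau>. (h \<tau> + e / c) * exp (- c * \<tau>)) has_real_derivative \<psi>' \<tau>) (at \<tau> within {0..})"
      using c by (auto intro!: derivative_eq_intros d[OF that] simp: \<psi>'_def field_simps)
    then show ?thesis unfolding \<psi>_def by simp
  qed
  moreover have "\<psi>' \<tau> \<le> 0" if "0 \<le> \<tau>" "\<tau> \<le> T" for \<tau>
    unfolding \<psi>'_def using le[OF that] by (intro mult_nonpos_nonneg) auto
  ultimately have "\<psi> t \<le> \<psi> 0" by (intro mono_deriv_nonpos[of T \<psi> \<psi>'] t)
  then have "(h t + e / c) * exp (- c * t) * exp (c * t) \<le> (h 0 + e / c) * exp (c * t)"
    unfolding \<psi>_def by (intro mult_right_mono) auto
  then show ?thesis by (simp add: mult.assoc flip: exp_add)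
qed

lemma chain_Z:
  assumes Z: "(Z has_derivative DZ) (at (g \<tau>))"
    and g: "(g has_vector_derivative v) (at \<tau> within S)"
  shows "((\<lambda>s. Z (g s)) has_real_derivative DZ v) (at \<tau> within S)"
proof -
  have g': "(g has_derivative (\<lambda>h. h *\<^sub>R v)) (at \<tau> within S)"
    using g by (simp add: has_vector_derivative_def)
  have "((Z \<circ> g) has_derivative (DZ \<circ> (\<lambda>h. h *\<^sub>R v))) (at \<tau> within S)"
    by (rule diff_chain_within[OF g' has_derivative_at_withinI[OF Z]])
  moreover have "(DZ \<circ> (\<lambda>h. h *\<^sub>R v)) = (*) (DZ v)"
    using linear_cmul[OF has_derivative_linear[OF Z]] by (auto simp: fun_eq_iff)
  ultimately show ?thesis by (simp add: has_field_derivative_def o_def)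
qed

lemma norm2_deriv:
  fixes x :: "'a::real_inner"
  shows "((\<lambda>x. (norm x)^2) has_derivative (\<lambda>h. 2 * (x \<bullet> h))) (at x)"
proof -
  have "((\<lambda>x. x \<bullet> x) has_derivative (\<lambda>h. x \<bullet> h + h \<bullet> x)) (at x)"
    by (intro derivative_eq_intros) auto
  then show ?thesis by (simp add: power2_norm_eq_inner inner_commute)
qed


lemma integral_pow:
  assumes "0 \<le> t"
  shows "integral {0..t} (\<lambda>s. C * s ^ k) = C * t ^ Suc k / real (Suc k)"
proof -
  have "((\<lambda>s. C * s ^ k) has_integral ((\<lambda>s. C * s ^ Suc k / real (Suc k)) t - (\<lambda>s. C * s ^ Suc k / real (Suc k)) 0)) {0..t}"
  proof (rule fundamental_theorem_of_calculus[OF assms])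
    fix x :: real assume "x \<in> {0..t}"
    have dp: "((\<lambda>s. s ^ Suc k) has_real_derivative real (Suc k) * x ^ k) (at x within {0..t})"
      using DERIV_pow[of "Suc k" x "{0..t}"] by simp
    have "((\<lambda>s. C * s ^ Suc k / real (Suc k)) has_real_derivative C * (real (Suc k) * x ^ k) / real (Suc k)) (at x within {0..t})"
      by (intro DERIV_cdivide DERIV_cmult dp)
    then have "((\<lambda>s. C * s ^ Suc k / real (Suc k)) has_real_derivative C * x ^ k) (at x within {0..t})"
      by (simp del: of_nat_Suc)
    then show "((\<lambda>s. C * s ^ Suc k / real (Suc k)) has_vector_derivative C * x ^ k) (at x within {0..t})"
      by (simp add: has_real_derivative_iff_has_vector_derivative)
  qed
  from this[THEN integral_unique] show ?thesis by simp
qed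

lemma picard_global:
  fixes G :: "'a::euclidean_space \<Rightarrow> 'a"
  assumes L: "\<And>x y. norm (G x - G y) \<le> L * norm (x - y)" and L0: "L \<ge> 0"
  shows "\<exists>g. is_solution G x0 g"
proof -
  have Gc: "continuous_on UNIV G"
    by (rule lipschitz_on_continuous_on[of L]) (auto simp: lipschitz_on_def dist_norm L L0)
  define pic :: "nat \<Rightarrow> real \<Rightarrow> 'a" where "pic = rec_nat (\<lambda>t. x0) (\<lambda>n p t. x0 + integral {0..t} (\<lambda>s. G (p s)))"
  have pic0: "pic 0 = (\<lambda>t. x0)" and picS: "\<And>n. pic (Suc n) = (\<lambda>t. x0 + integral {0..t} (\<lambda>s. G (pic n s)))"
    by (simp_all add: pic_def)
  have cont: "continuous_on {0..T} (pic n)" for n T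
  proof (induction n)
    case 0 then show ?case by (simp add: pic0)
  next
    case (Suc n)
    have "continuous_on {0..T} (\<lambda>s. G (pic n s))"
      by (rule continuous_on_compose2[OF Gc Suc]) auto
    then have "(\<lambda>s. G (pic n s)) integrable_on {0..T}" by (rule integrable_continuous_real)
    then have "continuous_on {0..T} (\<lambda>t. integral {0..t} (\<lambda>s. G (pic n s)))"
      by (rule indefinite_integral_continuous_1)
    then show ?case unfolding picS by (intro continuous_on_add continuous_on_const)
  qed
  have Gcont: "continuous_on {0..T} (\<lambda>s. G (pic n s))" for n T
    by (rule continuous_on_compose2[OF Gc cont]) auto
  have Gint: "(\<lambda>s. G (pic n s)) integrable_on {0..T}" for n T
    by (rule integrable_continuous_real[OF Gcont])
  define M where "M = norm (G x0)"
  have M0: "M \<ge> 0" by (simp add: M_def)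
  have bound: "norm (pic (Suc n) t - pic n t) \<le> M * L ^ n * t ^ Suc n / fact (Suc n)" if "0 \<le> t" for n t
    using that
  proof (induction n arbitrary: t)
    case 0
    then show ?case by (simp add: picS pic0 integral_const_real M_def)
  next
    case (Suc n)
    have e1: "pic (Suc (Suc n)) t = x0 + integral {0..t} (\<lambda>s. G (pic (Suc n) s))" by (simp only: picS[of "Suc n"])
    have e2: "pic (Suc n) t = x0 + integral {0..t} (\<lambda>s. G (pic n s))" by (simp only: picS[of n])
    have "pic (Suc (Suc n)) t - pic (Suc n) t = integral {0..t} (\<lambda>s. G (pic (Suc n) s) - G (pic n s))"
      unfolding e1 e2 integral_diff[OF Gint Gint] by simp
    also have "norm \<dots> \<le> integral {0..t} (\<lambda>s. (L * (M * L ^ n / fact (Suc n))) * s ^ Suc n)"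
    proof (rule integral_norm_bound_integral[OF integrable_diff[OF Gint Gint]])
      show "(\<lambda>s. (L * (M * L ^ n / fact (Suc n))) * s ^ Suc n) integrable_on {0..t}"
        by (intro integrable_continuous_real continuous_intros)
      fix s assume s: "s \<in> {0..t}"
      have "norm (G (pic (Suc n) s) - G (pic n s)) \<le> L * norm (pic (Suc n) s - pic n s)" by (rule L)
      also have "\<dots> \<le> L * (M * L ^ n * s ^ Suc n / fact (Suc n))"
        using Suc.IH[of s] s L0 by (intro mult_left_mono) auto
      finally show "norm (G (pic (Suc n) s) - G (pic n s)) \<le> (L * (M * L ^ n / fact (Suc n))) * s ^ Suc n"
        by (simp add: field_simps)
    qed
    also have "\<dots> = (L * (M * L ^ n / fact (Suc n))) * t ^ Suc (Suc n) / real (Suc (Suc n))"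
      by (rule integral_pow[OF Suc.prems])
    also have "\<dots> = M * L ^ Suc n * t ^ Suc (Suc n) / fact (Suc (Suc n))"
      by (simp add: field_simps fact_Suc[of "Suc n"] del: fact_Suc of_nat_Suc)
    finally show ?case .
  qed
  define d where "d k t = pic (Suc k) t - pic k t" for k t
  have picsum: "pic n = (\<lambda>t. x0 + (\<Sum>k<n. d k t))" for n
  proof (rule ext)
    fix t show "pic n t = x0 + (\<Sum>k<n. d k t)"
      using sum_lessThan_telescope[of "\<lambda>k. pic k t" n] by (simp add: d_def pic0)
  qed
  define p where "p t = x0 + (\<Sum>k. d k t)" for t
  have ulim: "uniform_limit {0..T} pic p sequentially" if "T \<ge> 0" for T
  proof -
    have sm: "summable (\<lambda>k. M * L ^ k * T ^ Suc k / fact (Suc k))"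
    proof (rule summable_comparison_test')
      show "summable (\<lambda>k. (M * T) * (inverse (fact k) * (L * T) ^ k))"
        by (intro summable_mult summable_exp)
      fix k :: nat
      have "fact k \<le> (fact (Suc k) :: real)" by (intro fact_mono) auto
      then have "M * L ^ k * T ^ Suc k / fact (Suc k) \<le> M * L ^ k * T ^ Suc k / fact k"
        using M0 L0 that by (intro divide_left_mono mult_nonneg_nonneg zero_le_power) auto
      then show "norm (M * L ^ k * T ^ Suc k / fact (Suc k)) \<le> (M * T) * (inverse (fact k) * (L * T) ^ k)"
        using M0 L0 that by (simp add: field_simps power_mult_distrib)
    qed
    have "uniform_limit {0..T} (\<lambda>n t. \<Sum>k<n. d k t) (\<lambda>t. \<Sum>k. d k t) sequentially"
    proof (rule Weierstrass_m_test[OF _ sm])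
      fix k t assume t: "t \<in> {0..T}"
      have "norm (d k t) \<le> M * L ^ k * t ^ Suc k / fact (Suc k)" using bound[of t k] t by (simp add: d_def)
      also have "\<dots> \<le> M * L ^ k * T ^ Suc k / fact (Suc k)"
        using t M0 L0 by (intro divide_right_mono mult_left_mono power_mono) auto
      finally show "norm (d k t) \<le> M * L ^ k * T ^ Suc k / fact (Suc k)" .
    qed
    from uniform_limit_add[OF uniform_limit_const this]
    show ?thesis unfolding picsum p_def[abs_def] .
  qed
  have pcont: "continuous_on {0..T} p" for T
  proof (cases "T \<ge> 0")
    case True
    show ?thesis by (rule uniform_limit_theorem[OF _ ulim[OF True]]) (auto intro: always_eventually cont)
  next
    case False then show ?thesis by simp
  qed
  have inteq: "p t = x0 + integral {0..t} (\<lambda>s. G (p s))" if t: "t \<ge> 0" for t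
  proof -
    have ul2: "uniform_limit {0..t} (\<lambda>n s. G (pic n s)) (\<lambda>s. G (p s)) sequentially"
      unfolding uniform_limit_iff
    proof (intro allI impI)
      fix e :: real assume e: "e > 0"
      have "\<forall>\<^sub>F n in sequentially. \<forall>x\<in>{0..t}. dist (pic n x) (p x) < e / (L + 1)"
        using ulim[OF t] e L0 unfolding uniform_limit_iff by auto
      then show "\<forall>\<^sub>F n in sequentially. \<forall>x\<in>{0..t}. dist (G (pic n x)) (G (p x)) < e"
      proof eventually_elim
        case (elim n)
        show ?case
        proof
          fix x assume x: "x \<in> {0..t}"
          have "dist (G (pic n x)) (G (p x)) \<le> L * dist (pic n x) (p x)" by (simp add: dist_norm L)
          also have "\<dots> \<le> (L + 1) * dist (pic n x) (p x)" by (intro mult_right_mono) auto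
          also have "\<dots> < (L + 1) * (e / (L + 1))" using elim x L0 by (intro mult_strict_left_mono) auto
          also have "\<dots> = e" using L0 by simp
          finally show "dist (G (pic n x)) (G (p x)) < e" .
        qed
      qed
    qed
    obtain I J where I: "\<And>n. ((\<lambda>s. G (pic n s)) has_integral I n) {0..t}"
      and J: "((\<lambda>s. G (p s)) has_integral J) {0..t}" and IJ: "I \<longlonglongrightarrow> J"
      using uniform_limit_integral[OF ul2 Gcont] by auto
    have "(\<lambda>n. pic (Suc n) t) \<longlonglongrightarrow> x0 + J"
    proof -
      have "integral {0..t} (\<lambda>s. G (pic n s)) = I n" for n using I[of n] by (rule integral_unique)
      then show ?thesis unfolding picS using tendsto_add[OF tendsto_const IJ, of x0] by simp
    qed
    moreover have "(\<lambda>n. pic (Suc n) t) \<longlonglongrightarrow> p t"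
      using LIMSEQ_Suc[OF tendsto_uniform_limitI[OF ulim[OF t], of t]] t by simp
    ultimately have "p t = x0 + J" using LIMSEQ_unique by blast
    then show ?thesis using J by (simp add: integral_unique)
  qed
  have "is_solution G x0 p"
    unfolding is_solution_def
  proof (intro conjI allI impI)
    show "p 0 = x0" using inteq[of 0] by simp
    fix t :: real assume t: "t \<ge> 0"
    have pc: "continuous_on {0..t+1} (\<lambda>s. G (p s))"
      by (rule continuous_on_compose2[OF Gc pcont]) auto
    have "((\<lambda>u. x0 + integral {0..u} (\<lambda>s. G (p s))) has_vector_derivative G (p t)) (at t within {0..t+1})"
      using integral_has_vector_derivative[OF pc, of t] t
      by (auto intro: has_vector_derivative_add[OF has_vector_derivative_const, of _ _ _ x0, simplified])
    then have "(p has_vector_derivative G (p t)) (at t within {0..t+1})"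
      by (rule has_vector_derivative_transform_within[of _ _ _ _ 1]) (use t inteq in auto)
    moreover have "at t within {0..t+1} = at t within {0..}"
      by (rule at_within_nhd[of _ "{..<t+1}"]) auto
    ultimately show "(p has_vector_derivative G (p t)) (at t within {0..})" by simp
  qed
  then show ?thesis by blast
qed


locale dsys =
  fixes F :: "'a::euclidean_space \<Rightarrow> 'a" and Z :: "'a \<Rightarrow> real" and DZ :: "'a \<Rightarrow> 'a \<Rightarrow> real"
    and \<mu> K c1 c2 :: real
  assumes lipF: "lipb F"
    and Zd: "\<And>x. (Z has_derivative DZ x) (at x)"
    and Zdiss: "\<And>x. DZ x (F x) \<le> - \<mu> * Z x + K"
    and mu: "\<mu> > 0" and K0: "K \<ge> 0" and c1: "c1 > 0"
    and Zlow: "\<And>x. c1 * (norm x)^2 \<le> Z x" and Zup: "\<And>x. Z x \<le> c2 * (norm x)^2"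
begin

lemma Z_nonneg: "Z x \<ge> 0"
  using Zlow[of x] c1 by (smt (verit) mult_nonneg_nonneg zero_le_power2)

lemma lyap_local:
  assumes d: "\<And>\<tau>. 0 \<le> \<tau> \<Longrightarrow> \<tau> \<le> T \<Longrightarrow> (g has_vector_derivative F (g \<tau>)) (at \<tau> within {0..})"
    and t: "0 \<le> t" "t \<le> T"
  shows "Z (g t) \<le> Z (g 0) * exp (- \<mu> * t) + K / \<mu>"
proof -
  define E where "E = exp (- \<mu> * t)"
  have h1: "Z (g t) + K / (- \<mu>) \<le> (Z (g 0) + K / (- \<mu>)) * exp (- \<mu> * t)"
  proof (rule lin_ineq[where h="\<lambda>s. Z (g s)" and h'="\<lambda>s. DZ (g s) (F (g s))" and T=T])
    fix \<tau> :: real assume "0 \<le> \<tau>" "\<tau> \<le> T"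
    show "((\<lambda>s. Z (g s)) has_real_derivative DZ (g \<tau>) (F (g \<tau>))) (at \<tau> within {0..})"
      by (rule chain_Z[OF Zd d]) fact+
    show "DZ (g \<tau>) (F (g \<tau>)) \<le> - \<mu> * Z (g \<tau>) + K" by (rule Zdiss)
  qed (use mu t in auto)
  have h3: "K / (- \<mu>) = - (K / \<mu>)" by simp
  have h1': "Z (g t) - K / \<mu> \<le> (Z (g 0) - K / \<mu>) * E"
    using h1 unfolding h3 E_def by simp
  have h2: "(Z (g 0) - K / \<mu>) * E \<le> Z (g 0) * E"
    unfolding E_def using K0 mu by (intro mult_right_mono) auto
  have "Z (g t) \<le> Z (g 0) * E + K / \<mu>" using h1' h2 by linarith
  then show ?thesis unfolding E_def .
qed

lemma sol_bound:
  assumes "is_solution F x0 g" "t \<ge> 0"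
  shows "Z (g t) \<le> Z x0 * exp (- \<mu> * t) + K / \<mu>"
  using lyap_local[of t g t] assms unfolding is_solution_def by auto

lemma sol_bound2:
  assumes "is_solution F x0 g" "t \<ge> 0"
  shows "Z (g t) \<le> Z x0 + K / \<mu>"
proof -
  have "Z x0 * exp (- \<mu> * t) \<le> Z x0 * 1"
    using Z_nonneg mu assms(2) by (intro mult_left_mono) auto
  then show ?thesis using sol_bound[OF assms] by simp
qed

lemma norm_le_Z: "norm x \<le> sqrt (B / c1)" if "Z x \<le> B"
proof -
  have "(norm x)^2 \<le> B / c1" using Zlow[of x] that c1 by (simp add: field_simps)
  then show ?thesis by (simp add: real_le_rsqrt)
qed

lemma existence: "\<exists>g. is_solution F x0 g"
proof -
  define B where "B = (Z x0 + K / \<mu>) / c1"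
  define R1 where "R1 = sqrt B + 1/2"
  define R where "R = sqrt B + 1"
  have B0: "B \<ge> 0" unfolding B_def using Z_nonneg K0 mu c1 by auto
  have R1R: "R = R1 + 1/2" unfolding R_def R1_def by simp
  have R1pos: "R1 > 0" unfolding R1_def using real_sqrt_ge_zero[OF B0] by linarith
  obtain L where L0: "L \<ge> 0" and L: "\<And>x y. norm x \<le> R \<Longrightarrow> norm y \<le> R \<Longrightarrow> norm (F x - F y) \<le> L * norm (x - y)"
    using lipF by (rule lipbD[where R=R]) auto
  define cp where "cp = closest_point (cball (0::'a) R)"
  have cpin: "norm (cp x) \<le> R" for x
    unfolding cp_def using closest_point_in_set[of "cball (0::'a) R" x] R1R R1pos by auto
  have cplip: "norm (cp x - cp y) \<le> norm (x - y)" for x y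
    unfolding cp_def using closest_point_lipschitz[of "cball (0::'a) R" x y] R1R R1pos by (simp add: dist_norm)
  have cpself: "cp x = x" if "norm x \<le> R" for x
    unfolding cp_def using that R1R R1pos by (intro closest_point_self) auto
  define G where "G x = F (cp x)" for x
  have "norm (G x - G y) \<le> L * norm (x - y)" for x y
  proof -
    have "norm (G x - G y) \<le> L * norm (cp x - cp y)" unfolding G_def by (rule L[OF cpin cpin])
    also have "\<dots> \<le> L * norm (x - y)" using L0 cplip by (intro mult_left_mono) auto
    finally show ?thesis .
  qed
  then obtain y where y: "is_solution G x0 y" using picard_global L0 by blast
  have y0: "y 0 = x0" and yd: "\<And>t. t \<ge> 0 \<Longrightarrow> (y has_vector_derivative G (y t)) (at t within {0..})"
    using y unfolding is_solution_def by auto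
  have ycont: "continuous_on {0..} y"
  proof (unfold continuous_on_eq_continuous_within, intro ballI)
    fix t :: real assume "t \<in> {0..}"
    then show "continuous (at t within {0..}) y" by (intro has_vector_derivative_continuous[OF yd]) auto
  qed
  have x0B: "norm x0 \<le> sqrt B" unfolding B_def by (rule norm_le_Z) (use K0 mu in auto)
  have claim: "norm (y t) < R1" if t: "t \<ge> 0" for t
  proof (rule ccontr)
    assume "\<not> norm (y t) < R1"
    define S where "S = {0..} \<inter> (\<lambda>t. norm (y t)) -` {R1..}"
    have tS: "t \<in> S" unfolding S_def using t \<open>\<not> norm (y t) < R1\<close> by auto
    have "closed S" unfolding S_def
      by (intro continuous_closed_preimage continuous_on_norm ycont) auto
    moreover have "bdd_below S" unfolding S_def by (auto intro: bdd_belowI[of _ 0])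
    ultimately have tsS: "Inf S \<in> S" using tS by (intro closed_contains_Inf) auto
    define ts where "ts = Inf S"
    have ts0: "ts \<ge> 0" and tsR1: "norm (y ts) \<ge> R1" using tsS unfolding ts_def S_def by auto
    have before: "norm (y \<tau>) < R1" if "0 \<le> \<tau>" "\<tau> < ts" for \<tau>
    proof (rule ccontr)
      assume "\<not> norm (y \<tau>) < R1"
      then have "\<tau> \<in> S" unfolding S_def using that by auto
      then have "ts \<le> \<tau>" unfolding ts_def using \<open>bdd_below S\<close> by (rule cInf_lower)
      then show False using that by auto
    qed
    have tspos: "ts > 0"
    proof (rule ccontr)
      assume "\<not> ts > 0"
      then have "ts = 0" using ts0 by auto
      then show False using tsR1 y0 x0B unfolding R1_def by auto
    qed
    have "continuous (at ts within {0..}) y" using ycont ts0 continuous_on_eq_continuous_within by auto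
    then obtain \<delta> where \<delta>: "\<delta> > 0" "\<And>\<tau>. \<tau> \<in> {0..} \<Longrightarrow> dist \<tau> ts < \<delta> \<Longrightarrow> dist (y \<tau>) (y ts) < 1/2"
      unfolding continuous_within_eps_delta by (metis half_gt_zero_iff zero_less_one)
    define \<tau> where "\<tau> = max 0 (ts - \<delta>/2)"
    have "\<tau> \<in> {0..}" "dist \<tau> ts < \<delta>" "\<tau> < ts" unfolding \<tau>_def using \<delta>(1) tspos by (auto simp: dist_real_def)
    then have "norm (y \<tau>) < R1" "dist (y \<tau>) (y ts) < 1/2" using before \<delta>(2) by auto
    then have tsR: "norm (y ts) \<le> R" unfolding R1R dist_norm
      by (smt (verit) norm_minus_commute norm_triangle_ineq2)
    have inR: "norm (y s) \<le> R" if "0 \<le> s" "s \<le> ts" for s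
      using before[of s] tsR that R1R by (cases "s = ts") auto
    have "Z (y ts) \<le> Z (y 0) * exp (- \<mu> * ts) + K / \<mu>"
    proof (rule lyap_local[of ts y ts])
      fix s :: real assume s: "0 \<le> s" "s \<le> ts"
      have "G (y s) = F (y s)" unfolding G_def using cpself[OF inR[OF s]] by simp
      then show "(y has_vector_derivative F (y s)) (at s within {0..})" using yd[of s] s by simp
    qed (use ts0 in auto)
    also have "Z (y 0) * exp (- \<mu> * ts) \<le> Z (y 0) * 1"
      using Z_nonneg mu ts0 by (intro mult_left_mono) auto
    finally have "Z (y ts) \<le> Z x0 + K / \<mu>" using y0 by simp
    then have "norm (y ts) \<le> sqrt B" unfolding B_def by (rule norm_le_Z)
    then show False using tsR1 unfolding R1_def by simp
  qed
  have "is_solution F x0 y"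
    unfolding is_solution_def
  proof (intro conjI allI impI)
    show "y 0 = x0" by (rule y0)
    fix t :: real assume t: "t \<ge> 0"
    have "G (y t) = F (y t)" unfolding G_def using cpself claim[OF t] R1R by simp
    then show "(y has_vector_derivative F (y t)) (at t within {0..})" using yd[OF t] by simp
  qed
  then show ?thesis by blast
qed

end


context dsys
begin

lemma gronwall_sol:
  assumes g1: "is_solution F x0 g1" and g2: "is_solution F y0 g2"
    and R1: "\<And>\<tau>. \<tau> \<ge> 0 \<Longrightarrow> norm (g1 \<tau>) \<le> R" and R2: "\<And>\<tau>. \<tau> \<ge> 0 \<Longrightarrow> norm (g2 \<tau>) \<le> R"
    and L0: "L \<ge> 0" and L: "\<And>x y. norm x \<le> R \<Longrightarrow> norm y \<le> R \<Longrightarrow> norm (F x - F y) \<le> L * norm (x - y)"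
    and t: "t \<ge> 0"
  shows "(norm (g1 t - g2 t))^2 \<le> (norm (x0 - y0))^2 * exp ((2*L+1) * t)"
proof -
  have d1: "\<And>t. t \<ge> 0 \<Longrightarrow> (g1 has_vector_derivative F (g1 t)) (at t within {0..})" and i1: "g1 0 = x0"
    using g1 unfolding is_solution_def by auto
  have d2: "\<And>t. t \<ge> 0 \<Longrightarrow> (g2 has_vector_derivative F (g2 t)) (at t within {0..})" and i2: "g2 0 = y0"
    using g2 unfolding is_solution_def by auto
  have "(norm (g1 t - g2 t))^2 + 0 / (2*L+1) \<le> ((norm (g1 0 - g2 0))^2 + 0 / (2*L+1)) * exp ((2*L+1) * t)"
  proof (rule lin_ineq[where h="\<lambda>s. (norm (g1 s - g2 s))^2"
        and h'="\<lambda>s. 2 * ((g1 s - g2 s) \<bullet> (F (g1 s) - F (g2 s)))" and T=t])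
    fix \<tau> :: real assume \<tau>: "0 \<le> \<tau>" "\<tau> \<le> t"
    have dd: "((\<lambda>s. g1 s - g2 s) has_vector_derivative F (g1 \<tau>) - F (g2 \<tau>)) (at \<tau> within {0..})"
      by (intro has_vector_derivative_diff d1 d2 \<tau>)
    show "((\<lambda>s. (norm (g1 s - g2 s))^2) has_real_derivative 2 * ((g1 \<tau> - g2 \<tau>) \<bullet> (F (g1 \<tau>) - F (g2 \<tau>)))) (at \<tau> within {0..})"
      using chain_Z[where Z="\<lambda>x. (norm x)^2" and g="\<lambda>s. g1 s - g2 s", OF norm2_deriv dd] by simp
    have "(g1 \<tau> - g2 \<tau>) \<bullet> (F (g1 \<tau>) - F (g2 \<tau>)) \<le> norm (g1 \<tau> - g2 \<tau>) * norm (F (g1 \<tau>) - F (g2 \<tau>))"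
      by (rule norm_cauchy_schwarz)
    also have "\<dots> \<le> norm (g1 \<tau> - g2 \<tau>) * (L * norm (g1 \<tau> - g2 \<tau>))"
      by (intro mult_left_mono L R1 R2 \<tau>) auto
    finally have "2 * ((g1 \<tau> - g2 \<tau>) \<bullet> (F (g1 \<tau>) - F (g2 \<tau>))) \<le> 2 * L * (norm (g1 \<tau> - g2 \<tau>))^2"
      by (simp add: power2_eq_square algebra_simps)
    also have "\<dots> \<le> (2 * L + 1) * (norm (g1 \<tau> - g2 \<tau>))^2"
      by (intro mult_right_mono) auto
    finally show "2 * ((g1 \<tau> - g2 \<tau>) \<bullet> (F (g1 \<tau>) - F (g2 \<tau>))) \<le> (2 * L + 1) * (norm (g1 \<tau> - g2 \<tau>))^2 + 0"
      by simp
  qed (use L0 t in auto)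
  then show ?thesis using i1 i2 by simp
qed

lemma sol_norm_bound:
  assumes "is_solution F x0 g" "t \<ge> 0"
  shows "norm (g t) \<le> sqrt ((Z x0 + K / \<mu>) / c1)"
  by (rule norm_le_Z) (rule sol_bound2[OF assms])

theorem uniqueness:
  assumes g1: "is_solution F x0 g1" and g2: "is_solution F x0 g2" and t: "t \<ge> 0"
  shows "g1 t = g2 t"
proof -
  define R where "R = sqrt ((Z x0 + K / \<mu>) / c1)"
  obtain L where L0: "L \<ge> 0" and L: "\<And>x y. norm x \<le> R \<Longrightarrow> norm y \<le> R \<Longrightarrow> norm (F x - F y) \<le> L * norm (x - y)"
    using lipF by (rule lipbD[where R=R]) auto
  have "(norm (g1 t - g2 t))^2 \<le> (norm (x0 - x0))^2 * exp ((2*L+1) * t)"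
    by (rule gronwall_sol[OF g1 g2 _ _ L0 L t]) (auto simp: R_def intro: sol_norm_bound[OF g1] sol_norm_bound[OF g2])
  then show ?thesis by simp
qed

definition sol :: "'a \<Rightarrow> real \<Rightarrow> 'a" where
  "sol x = (SOME g. is_solution F x g)"

lemma sol_ok: "is_solution F x (sol x)"
  unfolding sol_def using existence by (rule someI_ex)

lemma S_eq: "t \<ge> 0 \<Longrightarrow> semiflow F t x = sol x t"
  unfolding semiflow_def
proof (rule the_equality)
  show "\<exists>g. is_solution F x g \<and> g t = sol x t" using sol_ok by blast
  fix y assume "t \<ge> 0" "\<exists>g. is_solution F x g \<and> g t = y"
  then show "y = sol x t" using uniqueness[OF _ sol_ok] by blast
qed

lemma S_0: "semiflow F 0 x = x"
  using S_eq[of 0 x] sol_ok[of x] unfolding is_solution_def by simp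

lemma S_semigroup:
  assumes s: "s \<ge> 0" and t: "t \<ge> 0"
  shows "semiflow F (s + t) x = semiflow F t (semiflow F s x)"
proof -
  define g where "g \<tau> = sol x (s + \<tau>)" for \<tau>
  have "is_solution F (sol x s) g"
    unfolding is_solution_def
  proof (intro conjI allI impI)
    show "g 0 = sol x s" by (simp add: g_def)
    fix \<tau> :: real assume \<tau>: "\<tau> \<ge> 0"
    have d: "(sol x has_vector_derivative F (sol x (s + \<tau>))) (at (s + \<tau>) within {0..})"
      using sol_ok[of x] s \<tau> unfolding is_solution_def by auto
    have d': "(sol x has_vector_derivative F (sol x (s + \<tau>))) (at (s + \<tau>) within (\<lambda>\<tau>. s + \<tau>) ` {0..})"
      by (rule has_vector_derivative_within_subset[OF d]) (use s in auto)
    have "((\<lambda>\<tau>. s + \<tau>) has_vector_derivative 1) (at \<tau> within {0..})"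
      by (auto intro!: derivative_eq_intros)
    from vector_diff_chain_within[OF this d']
    have "((\<lambda>\<tau>. sol x (s + \<tau>)) has_vector_derivative F (sol x (s + \<tau>))) (at \<tau> within {0..})"
      by (simp add: o_def)
    moreover have "g = (\<lambda>\<tau>. sol x (s + \<tau>))" by (simp add: g_def fun_eq_iff)
    ultimately show "(g has_vector_derivative F (g \<tau>)) (at \<tau> within {0..})"
      by simp
  qed
  then have "g t = sol (sol x s) t" using uniqueness[OF _ sol_ok t] by blast
  then show ?thesis using s t by (simp add: S_eq g_def)
qed

definition rad :: "real \<Rightarrow> real" where
  "rad r = sqrt ((max c2 0 * r^2 + K / \<mu>) / c1)"

lemma Z_le_r: "norm x \<le> r \<Longrightarrow> Z x \<le> max c2 0 * r^2"
proof -
  assume a: "norm x \<le> r"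
  have "Z x \<le> c2 * (norm x)^2" by (rule Zup)
  also have "\<dots> \<le> max c2 0 * (norm x)^2" by (intro mult_right_mono) auto
  also have "\<dots> \<le> max c2 0 * r^2" using a by (intro mult_left_mono power_mono) auto
  finally show ?thesis .
qed

lemma S_bound:
  assumes "norm x \<le> r" "t \<ge> 0"
  shows "norm (semiflow F t x) \<le> rad r"
proof -
  have "Z (sol x t) \<le> Z x + K / \<mu>" by (rule sol_bound2[OF sol_ok assms(2)])
  also have "\<dots> \<le> max c2 0 * r^2 + K / \<mu>" using Z_le_r[OF assms(1)] by simp
  finally show ?thesis unfolding rad_def S_eq[OF assms(2)] by (rule norm_le_Z)
qed

lemma S_lip:
  assumes t: "t \<ge> 0"
  obtains C where "\<And>x y. norm x \<le> r \<Longrightarrow> norm y \<le> r \<Longrightarrow> norm (semiflow F t x - semiflow F t y) \<le> C * norm (x - y)"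
proof -
  obtain L where L0: "L \<ge> 0" and L: "\<And>x y. norm x \<le> rad r \<Longrightarrow> norm y \<le> rad r \<Longrightarrow> norm (F x - F y) \<le> L * norm (x - y)"
    using lipF by (rule lipbD[where R="rad r"]) auto
  define C where "C = sqrt (exp ((2*L+1) * t))"
  have "norm (semiflow F t x - semiflow F t y) \<le> C * norm (x - y)" if xy: "norm x \<le> r" "norm y \<le> r" for x y
  proof -
    have "(norm (sol x t - sol y t))^2 \<le> (norm (x - y))^2 * exp ((2*L+1) * t)"
    proof (rule gronwall_sol[OF sol_ok sol_ok _ _ L0 L t])
      fix \<tau> :: real assume "\<tau> \<ge> 0"
      then show "norm (sol x \<tau>) \<le> rad r" "norm (sol y \<tau>) \<le> rad r"
        using S_bound[OF xy(1)] S_bound[OF xy(2)] S_eq by auto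
    qed
    then have "sqrt ((norm (sol x t - sol y t))^2) \<le> sqrt ((norm (x - y))^2 * exp ((2*L+1) * t))"
      by (rule real_sqrt_le_mono)
    then show ?thesis unfolding C_def using t by (simp add: S_eq real_sqrt_mult mult.commute)
  qed
  then show ?thesis using that by blast
qed

lemma S_cont_seq:
  assumes zn: "zn \<longlonglongrightarrow> z" and b: "\<And>n. norm (zn n) \<le> r" "norm z \<le> r" and t: "t \<ge> 0"
  shows "(\<lambda>n. semiflow F t (zn n)) \<longlonglongrightarrow> semiflow F t z"
proof -
  obtain C where C: "\<And>x y. norm x \<le> r \<Longrightarrow> norm y \<le> r \<Longrightarrow> norm (semiflow F t x - semiflow F t y) \<le> C * norm (x - y)"
    using S_lip[OF t] by blast
  have "(\<lambda>n. norm (zn n - z)) \<longlonglongrightarrow> 0" using zn by (simp add: tendsto_norm_zero_iff LIM_zero_iff)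
  then have lim: "(\<lambda>n. C * norm (zn n - z)) \<longlonglongrightarrow> 0"
    using tendsto_mult[OF tendsto_const, of _ 0 sequentially C] by simp
  have bnd: "\<forall>n. norm (semiflow F t (zn n) - semiflow F t z) \<le> C * norm (zn n - z)"
    using C b by blast
  have "(\<lambda>n. semiflow F t (zn n) - semiflow F t z) \<longlonglongrightarrow> 0"
    by (rule Lim_null_comparison[OF always_eventually[OF bnd] lim])
  then show ?thesis by (simp add: LIM_zero_iff)
qed

lemma absorb:
  assumes B: "bounded B" and \<delta>: "\<delta> > 0"
  shows "\<exists>T\<ge>0. \<forall>t\<ge>T. \<forall>x\<in>B. Z (semiflow F t x) \<le> K / \<mu> + \<delta>"
proof -
  obtain r where r: "\<And>x. x \<in> B \<Longrightarrow> norm x \<le> r" using B unfolding bounded_iff by blast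
  define Zm where "Zm = max c2 0 * r^2"
  have Zm0: "Zm \<ge> 0" unfolding Zm_def by simp
  define T where "T = max 0 (ln ((Zm + 1) / \<delta>) / \<mu>)"
  have "\<forall>t\<ge>T. \<forall>x\<in>B. Z (semiflow F t x) \<le> K / \<mu> + \<delta>"
  proof (intro allI impI ballI)
    fix t x assume tT: "t \<ge> T" and x: "x \<in> B"
    have t0: "t \<ge> 0" using tT unfolding T_def by auto
    have "\<mu> * t \<ge> ln ((Zm + 1) / \<delta>)" using tT mu unfolding T_def by (simp add: field_simps)
    then have "exp (- \<mu> * t) \<le> exp (- ln ((Zm + 1) / \<delta>))" by simp
    also have "\<dots> = \<delta> / (Zm + 1)" using Zm0 \<delta> by (simp add: exp_minus)
    finally have e: "exp (- \<mu> * t) \<le> \<delta> / (Zm + 1)" .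
    have "Z x * exp (- \<mu> * t) \<le> Zm * (\<delta> / (Zm + 1))"
      using Z_le_r[OF r[OF x]] e Z_nonneg unfolding Zm_def by (intro mult_mono) auto
    also have "\<dots> \<le> \<delta>" using Zm0 \<delta> by (simp add: field_simps)
    finally have "Z x * exp (- \<mu> * t) \<le> \<delta>" .
    then show "Z (semiflow F t x) \<le> K / \<mu> + \<delta>"
      using sol_bound[OF sol_ok t0, of x] S_eq[OF t0] by simp
  qed
  moreover have "T \<ge> 0" unfolding T_def by simp
  ultimately show ?thesis by blast
qed

end


context dsys
begin

definition B0 :: "'a set" where "B0 = {x. Z x \<le> K / \<mu> + 1}"
definition r0 :: real where "r0 = sqrt ((K / \<mu> + 1) / c1)"
definition R0 :: real where "R0 = rad r0"

lemma B0_r0: "x \<in> B0 \<Longrightarrow> norm x \<le> r0"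
  unfolding B0_def r0_def by (auto intro: norm_le_Z)

lemma B0_R0: "x \<in> B0 \<Longrightarrow> t \<ge> 0 \<Longrightarrow> norm (semiflow F t x) \<le> R0"
  unfolding R0_def by (rule S_bound[OF B0_r0])

definition Att :: "'a set" where
  "Att = {y. \<exists>xs \<tau>. (\<forall>n. xs n \<in> B0) \<and> (\<forall>n. real n \<le> \<tau> n) \<and> (\<lambda>n. semiflow F (\<tau> n) (xs n)) \<longlonglongrightarrow> y}"

lemma AttI: "(\<And>n. xs n \<in> B0) \<Longrightarrow> (\<And>n. real n \<le> \<tau> n) \<Longrightarrow> (\<lambda>n. semiflow F (\<tau> n) (xs n)) \<longlonglongrightarrow> y \<Longrightarrow> y \<in> Att"
  unfolding Att_def by blast

lemma Att_bound: assumes "y \<in> Att" shows "norm y \<le> R0"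
proof -
  obtain xs \<tau> where xs: "\<forall>n. xs n \<in> B0" "\<forall>n. real n \<le> \<tau> n" "(\<lambda>n. semiflow F (\<tau> n) (xs n)) \<longlonglongrightarrow> y"
    using assms unfolding Att_def by blast
  have "\<forall>n. norm (semiflow F (\<tau> n) (xs n)) \<le> R0"
  proof
    fix n have "\<tau> n \<ge> 0" using xs(2)[rule_format, of n] by linarith
    then show "norm (semiflow F (\<tau> n) (xs n)) \<le> R0" using B0_R0 xs(1) by blast
  qed
  then show ?thesis
    by (intro tendsto_upperbound[OF tendsto_norm[OF xs(3)]] always_eventually) auto
qed

lemma Att_closed: "closed Att"
  unfolding closed_sequential_limits
proof (intro allI impI, elim conjE)
  fix ys :: "nat \<Rightarrow> 'a" and l assume ys: "\<forall>n. ys n \<in> Att" and yl: "ys \<longlonglongrightarrow> l"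
  have "\<forall>k. \<exists>xs \<tau>. (\<forall>n. xs n \<in> B0) \<and> (\<forall>n. real n \<le> \<tau> n) \<and> (\<lambda>n. semiflow F (\<tau> n) (xs n)) \<longlonglongrightarrow> ys k"
    using ys unfolding Att_def by blast
  then obtain XS TT where H: "\<And>k. (\<forall>n. XS k n \<in> B0) \<and> (\<forall>n. real n \<le> TT k n) \<and> (\<lambda>n. semiflow F (TT k n) (XS k n)) \<longlonglongrightarrow> ys k"
    by metis
  have "\<exists>n\<ge>k. dist (semiflow F (TT k n) (XS k n)) (ys k) < inverse (real (Suc k))" for k
  proof -
    have "\<forall>\<^sub>F n in sequentially. dist (semiflow F (TT k n) (XS k n)) (ys k) < inverse (real (Suc k))"
      using H[of k] unfolding tendsto_iff by auto
    then obtain N where "\<And>n. n \<ge> N \<Longrightarrow> dist (semiflow F (TT k n) (XS k n)) (ys k) < inverse (real (Suc k))"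
      unfolding eventually_sequentially by blast
    then show ?thesis by (intro exI[of _ "max N k"]) auto
  qed
  then obtain N where N: "\<And>k. N k \<ge> k" "\<And>k. dist (semiflow F (TT k (N k)) (XS k (N k))) (ys k) < inverse (real (Suc k))"
    by metis
  show "l \<in> Att"
  proof (rule AttI[where xs="\<lambda>k. XS k (N k)" and \<tau>="\<lambda>k. TT k (N k)"])
    fix k
    show "XS k (N k) \<in> B0" using H by blast
    have "real (N k) \<le> TT k (N k)" using H by blast
    then show "real k \<le> TT k (N k)" using N(1)[of k] by linarith
  next
    have "(\<lambda>k. semiflow F (TT k (N k)) (XS k (N k)) - ys k) \<longlonglongrightarrow> 0"
    proof (rule Lim_null_comparison[OF always_eventually LIMSEQ_inverse_real_of_nat])
      show "\<forall>k. norm (semiflow F (TT k (N k)) (XS k (N k)) - ys k) \<le> inverse (real (Suc k))"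
        using N(2) by (simp add: dist_norm less_imp_le)
    qed
    then show "(\<lambda>k. semiflow F (TT k (N k)) (XS k (N k))) \<longlonglongrightarrow> l"
      by (rule Lim_transform[OF yl])
  qed
qed

lemma Att_compact: "compact Att"
proof -
  have "bounded Att" unfolding bounded_iff using Att_bound by blast
  then show ?thesis using Att_closed by (simp add: compact_eq_bounded_closed)
qed

lemma zero_B0: "0 \<in> B0"
proof -
  have "Z 0 \<le> 0" using Zup[of 0] by simp
  then show ?thesis unfolding B0_def using K0 mu by (smt (verit) divide_nonneg_pos mem_Collect_eq)
qed

lemma Att_nonempty: "Att \<noteq> {}"
proof -
  have "bounded (range (\<lambda>n::nat. semiflow F (real n) 0))"
    unfolding bounded_iff using B0_R0[OF zero_B0] by (intro exI[of _ R0]) auto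
  then obtain l r where r: "strict_mono r" "((\<lambda>n::nat. semiflow F (real n) 0) \<circ> r) \<longlonglongrightarrow> l"
    using bounded_imp_convergent_subsequence by blast
  have "l \<in> Att"
  proof (rule AttI[where xs="\<lambda>n. 0" and \<tau>="\<lambda>n. real (r n)"])
    show "0 \<in> B0" for n::nat by (rule zero_B0)
    show "real n \<le> real (r n)" for n using seq_suble[OF r(1)] by simp
    show "(\<lambda>n. semiflow F (real (r n)) 0) \<longlonglongrightarrow> l" using r(2) by (simp add: o_def)
  qed
  then show ?thesis by blast
qed

lemma Att_fwd: assumes y: "y \<in> Att" and t: "t \<ge> 0" shows "semiflow F t y \<in> Att"
proof -
  obtain xs \<tau> where xs: "\<forall>n. xs n \<in> B0" "\<forall>n. real n \<le> \<tau> n" "(\<lambda>n. semiflow F (\<tau> n) (xs n)) \<longlonglongrightarrow> y"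
    using y unfolding Att_def by blast
  have \<tau>0: "\<tau> n \<ge> 0" for n using xs(2)[rule_format, of n] by linarith
  show ?thesis
  proof (rule AttI[where xs=xs and \<tau>="\<lambda>n. \<tau> n + t"])
    show "xs n \<in> B0" for n using xs by blast
    show "real n \<le> \<tau> n + t" for n using xs(2) t by (smt (verit))
    have "(\<lambda>n. semiflow F t (semiflow F (\<tau> n) (xs n))) \<longlonglongrightarrow> semiflow F t y"
      by (rule S_cont_seq[OF xs(3) _ Att_bound[OF y] t]) (use B0_R0 xs(1) \<tau>0 in blast)
    then show "(\<lambda>n. semiflow F (\<tau> n + t) (xs n)) \<longlonglongrightarrow> semiflow F t y"
      using S_semigroup[OF \<tau>0 t] by simp
  qed
qed

lemma Att_bwd: assumes y: "y \<in> Att" and t: "t \<ge> 0" shows "y \<in> semiflow F t ` Att"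
proof -
  obtain xs \<tau> where xs: "\<forall>n. xs n \<in> B0" "\<forall>n. real n \<le> \<tau> n" "(\<lambda>n. semiflow F (\<tau> n) (xs n)) \<longlonglongrightarrow> y"
    using y unfolding Att_def by blast
  define N where "N = nat \<lceil>t\<rceil>"
  have NT: "real N \<ge> t" unfolding N_def by linarith
  define \<sigma> where "\<sigma> n = \<tau> (n + N) - t" for n
  have \<sigma>n: "\<sigma> n \<ge> real n" for n using xs(2)[rule_format, of "n + N"] NT unfolding \<sigma>_def by simp
  have \<sigma>0: "\<sigma> n \<ge> 0" for n using \<sigma>n[of n] by linarith
  define zs where "zs n = semiflow F (\<sigma> n) (xs (n + N))" for n
  have zsb: "norm (zs n) \<le> R0" for n unfolding zs_def using B0_R0 xs(1) \<sigma>0 by blast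
  then have "bounded (range zs)" unfolding bounded_iff by auto
  then obtain z r where r: "strict_mono r" "(zs \<circ> r) \<longlonglongrightarrow> z"
    using bounded_imp_convergent_subsequence by blast
  have zA: "z \<in> Att"
  proof (rule AttI[where xs="\<lambda>n. xs (r n + N)" and \<tau>="\<lambda>n. \<sigma> (r n)"])
    show "xs (r n + N) \<in> B0" for n using xs by blast
    show "real n \<le> \<sigma> (r n)" for n using \<sigma>n[of "r n"] seq_suble[OF r(1), of n] by linarith
    show "(\<lambda>n. semiflow F (\<sigma> (r n)) (xs (r n + N))) \<longlonglongrightarrow> z" using r(2) by (simp add: o_def zs_def)
  qed
  have "(\<lambda>n. semiflow F t (zs (r n))) \<longlonglongrightarrow> semiflow F t z"
    by (rule S_cont_seq[OF _ _ Att_bound[OF zA] t]) (use r(2) zsb in \<open>auto simp: o_def\<close>)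
  moreover have "(\<lambda>n. semiflow F t (zs (r n))) \<longlonglongrightarrow> y"
  proof -
    have "(\<lambda>n. semiflow F (\<tau> (n + N)) (xs (n + N))) \<longlonglongrightarrow> y"
      using LIMSEQ_ignore_initial_segment[OF xs(3), of N] by simp
    from LIMSEQ_subseq_LIMSEQ[OF this r(1)]
    have "(\<lambda>n. semiflow F (\<tau> (r n + N)) (xs (r n + N))) \<longlonglongrightarrow> y" by (simp add: o_def)
    moreover have "semiflow F t (zs (r n)) = semiflow F (\<tau> (r n + N)) (xs (r n + N))" for n
      unfolding zs_def using S_semigroup[OF \<sigma>0 t, of "r n" "xs (r n + N)"] by (simp add: \<sigma>_def)
    ultimately show ?thesis by simp
  qed
  ultimately have "y = semiflow F t z" using LIMSEQ_unique by blast
  then show ?thesis using zA by blast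
qed

lemma Att_attracts:
  assumes B: "bounded B" and e: "e > 0"
  shows "\<exists>T\<ge>0. \<forall>t\<ge>T. \<forall>x\<in>B. infdist (semiflow F t x) Att < e"
proof (rule ccontr)
  assume neg: "\<not> ?thesis"
  obtain Tb where Tb: "Tb \<ge> 0" "\<And>t x. t \<ge> Tb \<Longrightarrow> x \<in> B \<Longrightarrow> Z (semiflow F t x) \<le> K / \<mu> + 1"
    using absorb[OF B zero_less_one] by blast
  have "\<forall>n::nat. \<exists>t x. t \<ge> Tb + real n \<and> x \<in> B \<and> infdist (semiflow F t x) Att \<ge> e"
  proof
    fix n :: nat
    have "Tb + real n \<ge> 0" using Tb by simp
    then show "\<exists>t x. t \<ge> Tb + real n \<and> x \<in> B \<and> infdist (semiflow F t x) Att \<ge> e"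
      using neg by (meson not_less)
  qed
  then obtain tt xx where tx: "\<And>n. tt n \<ge> Tb + real n" "\<And>n. xx n \<in> B" "\<And>n. infdist (semiflow F (tt n) (xx n)) Att \<ge> e"
    by metis
  define b where "b n = semiflow F Tb (xx n)" for n
  define \<sigma> where "\<sigma> n = tt n - Tb" for n
  have bB0: "b n \<in> B0" for n unfolding b_def B0_def using Tb(2)[OF _ tx(2)] by auto
  have \<sigma>n: "\<sigma> n \<ge> real n" for n using tx(1)[of n] unfolding \<sigma>_def by simp
  have \<sigma>0: "\<sigma> n \<ge> 0" for n using \<sigma>n[of n] by linarith
  define w where "w n = semiflow F (\<sigma> n) (b n)" for n
  have wt: "w n = semiflow F (tt n) (xx n)" for n
    unfolding w_def b_def using S_semigroup[OF Tb(1) \<sigma>0, of n "xx n"] by (simp add: \<sigma>_def)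
  have "bounded (range w)" unfolding bounded_iff w_def using B0_R0 bB0 \<sigma>0 by blast
  then obtain l r where r: "strict_mono r" "(w \<circ> r) \<longlonglongrightarrow> l"
    using bounded_imp_convergent_subsequence by blast
  have lA: "l \<in> Att"
  proof (rule AttI[where xs="\<lambda>n. b (r n)" and \<tau>="\<lambda>n. \<sigma> (r n)"])
    show "b (r n) \<in> B0" for n by (rule bB0)
    show "real n \<le> \<sigma> (r n)" for n using \<sigma>n[of "r n"] seq_suble[OF r(1), of n] by linarith
    show "(\<lambda>n. semiflow F (\<sigma> (r n)) (b (r n))) \<longlonglongrightarrow> l" using r(2) by (simp add: o_def w_def)
  qed
  have "\<forall>\<^sub>F n in sequentially. dist ((w \<circ> r) n) l < e" using r(2) e unfolding tendsto_iff by auto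
  then obtain n where "dist (w (r n)) l < e" unfolding eventually_sequentially by auto
  moreover have "infdist (w (r n)) Att \<le> dist (w (r n)) l" by (rule infdist_le[OF lA])
  moreover have "infdist (w (r n)) Att \<ge> e" using tx(3) wt by simp
  ultimately show False by simp
qed

theorem attractor: "global_attractor (semiflow F) Att"
  unfolding global_attractor_def
proof (intro conjI allI impI)
  show "Att \<noteq> {}" by (rule Att_nonempty)
  show "compact Att" by (rule Att_compact)
  fix t :: real assume t: "t \<ge> 0"
  show "semiflow F t ` Att = Att" using Att_fwd[OF _ t] Att_bwd[OF _ t] by blast
next
  fix B :: "'a set" and e :: real assume "bounded B" "e > 0"
  then show "\<exists>T\<ge>0. \<forall>t\<ge>T. \<forall>x\<in>B. infdist (semiflow F t x) Att < e" by (rule Att_attracts)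
qed

end


lemma Gam_pos: "Gam r V s > 0"
  unfolding Gam_def by (simp add: add_pos_pos)

lemma diss:
  fixes a :: "real^'n::finite" and w :: "real^'n^'n" and f \<phi> :: "'n \<Rightarrow> real \<Rightarrow> real"
    and J \<gamma> \<eta> :: "real^'n" and k b \<beta> P r V amin W Jm gsq m C1 C2 \<mu> :: real
    and x :: "(real^'n) \<times> real"
  assumes P_pos: "P > 0" and b_pos: "b > 0" and k_pos: "k > 0" and beta_pos: "\<beta> > 0"
    and f_bd: "\<forall>i s. \<bar>f i s\<bar> \<le> \<beta>" and phi_def: "\<forall>i s. \<phi> i s = 1 - \<eta>$i * s^2"
    and eta_pos: "\<forall>i. \<eta>$i > 0"
    and amin_le: "\<forall>i. amin \<le> a$i" and alpha: "amin > k"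
    and Wb: "\<forall>i j. \<bar>w$i$j\<bar> \<le> W" and W0: "W \<ge> 0" and Jb: "\<forall>i. \<bar>J$i\<bar> \<le> Jm" and J0: "Jm \<ge> 0"
    and gb: "\<forall>i. (\<gamma>$i)^2 \<le> gsq" and g0: "gsq \<ge> 0"
    and m_def: "m = real CARD('n)"
    and C1_def: "C1 = (1 / (amin - k)) * (m * gsq / b + b)"
    and C2_def: "C2 = (m * gsq / b + b) * (m * (m * W * \<beta> + Jm)^2 / (amin - k)^2)"
    and mu_def: "\<mu> = b * min (1 / C1) 1"
  shows "2 * C1 * (fst x \<bullet> fst (nn_field a w f k \<phi> J P r V \<gamma> b x)) + 2 * snd x * snd (nn_field a w f k \<phi> J P r V \<gamma> b x)
         \<le> - \<mu> * (C1 * (fst x \<bullet> fst x) + snd x * snd x) + C2"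
proof -
  obtain u \<rho> where x: "x = (u, \<rho>)" by (cases x)
  define \<alpha> where "\<alpha> = amin - k"
  define e where "e = m * W * \<beta> + Jm"
  define FU where "FU = fst (nn_field a w f k \<phi> J P r V \<gamma> b x)"
  define FR where "FR = snd (nn_field a w f k \<phi> J P r V \<gamma> b x)"
  define X where "X = (\<Sum>i\<in>UNIV. (u$i)^2)"
  define s where "s = (\<Sum>i\<in>UNIV. \<bar>u$i\<bar>)"
  define g where "g = (\<Sum>i\<in>UNIV. \<gamma>$i * u$i)"
  have al: "\<alpha> > 0" unfolding \<alpha>_def using alpha by simp
  have m1: "m \<ge> 1" unfolding m_def by simp
  have e0: "e \<ge> 0" unfolding e_def using m1 W0 beta_pos J0 by simp
  have X0: "X \<ge> 0" unfolding X_def by (simp add: sum_nonneg)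
  have FUi: "FU $ i = - a$i * u$i + (\<Sum>j\<in>UNIV. w$i$j * f j (u$j)) + k * \<phi> i \<rho> * u$i + J$i
             - P * u$i * (\<Sum>j\<in>UNIV. Gam r V (u$j))" for i
    by (simp add: FU_def nn_field_def x)
  have FRe: "FR = g - b * \<rho>" by (simp add: FR_def nn_field_def x g_def)
  have sb: "\<bar>(\<Sum>j\<in>UNIV. w$i$j * f j (u$j)) + J$i\<bar> \<le> e" for i
  proof -
    have "\<bar>\<Sum>j\<in>UNIV. w$i$j * f j (u$j)\<bar> \<le> (\<Sum>j\<in>UNIV. \<bar>w$i$j * f j (u$j)\<bar>)" by (rule sum_abs)
    also have "\<dots> \<le> (\<Sum>j\<in>(UNIV::'n set). W * \<beta>)"
      by (intro sum_mono) (simp add: abs_mult mult_mono Wb f_bd W0)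
    also have "\<dots> = m * W * \<beta>" by (simp add: m_def)
    finally show ?thesis unfolding e_def using Jb[rule_format, of i] by (smt (verit) abs_triangle_ineq)
  qed
  have per: "u$i * FU$i \<le> - \<alpha> * (u$i)^2 + \<bar>u$i\<bar> * e" for i
  proof -
    define ui where "ui = u$i"
    define S where "S = (\<Sum>j\<in>UNIV. w$i$j * f j (u$j)) + J$i"
    define G where "G = (\<Sum>j\<in>UNIV. Gam r V (u$j))"
    have G0: "G \<ge> 0" unfolding G_def by (intro sum_nonneg) (simp add: less_imp_le Gam_pos)
    have eq: "u$i * FU$i = (- a$i * ui * ui) + ui * S + k * (1 - \<eta>$i * \<rho>^2) * ui * ui - P * ui * G * ui"
    proof -
      have phi_i: "\<phi> i \<rho> = 1 - \<eta>$i * \<rho>^2" using phi_def by simp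
      show ?thesis unfolding FUi ui_def S_def G_def phi_i by (simp add: algebra_simps)
    qed
    have t1: "- a$i * ui * ui \<le> - amin * ui^2"
    proof -
      have "amin * (ui * ui) \<le> a$i * (ui * ui)" using amin_le by (intro mult_right_mono) auto
      then show ?thesis by (simp add: power2_eq_square algebra_simps)
    qed
    have t2: "ui * S \<le> \<bar>ui\<bar> * e"
    proof -
      have "ui * S \<le> \<bar>ui\<bar> * \<bar>S\<bar>" by (metis abs_ge_self abs_mult)
      also have "\<dots> \<le> \<bar>ui\<bar> * e" using sb[of i] unfolding S_def by (intro mult_left_mono) auto
      finally show ?thesis .
    qed
    have t3: "k * (1 - \<eta>$i * \<rho>^2) * ui * ui \<le> k * ui^2"
    proof -
      have "0 \<le> k * (\<eta>$i * \<rho>^2 * ui^2)" using k_pos eta_pos by (intro mult_nonneg_nonneg) (auto intro: less_imp_le)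
      then show ?thesis by (simp add: power2_eq_square algebra_simps)
    qed
    have t4: "0 \<le> P * ui * G * ui"
    proof -
      have "0 \<le> P * G * (ui * ui)"
        by (rule mult_nonneg_nonneg[OF mult_nonneg_nonneg[OF less_imp_le[OF P_pos] G0] zero_le_square])
      then show ?thesis by (simp add: algebra_simps)
    qed
    have "u$i * FU$i \<le> - amin * ui^2 + \<bar>ui\<bar> * e + k * ui^2 - 0"
      unfolding eq by (intro diff_mono add_mono t1 t2 t3 t4)
    then show ?thesis unfolding \<alpha>_def ui_def by (simp add: algebra_simps)
  qed
  have inU: "fst x \<bullet> FU = (\<Sum>i\<in>UNIV. u$i * FU$i)" by (simp add: x inner_vec_def)
  have A: "fst x \<bullet> FU \<le> - \<alpha> * X + e * s"
  proof -
    have "fst x \<bullet> FU \<le> (\<Sum>i\<in>UNIV. - \<alpha> * (u$i)^2 + \<bar>u$i\<bar> * e)" unfolding inU by (intro sum_mono per)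
    also have "\<dots> = (\<Sum>i\<in>UNIV. - \<alpha> * (u$i)^2) + (\<Sum>i\<in>UNIV. \<bar>u$i\<bar> * e)"
      by (rule sum.distrib)
    also have "\<dots> = - \<alpha> * X + e * s"
      unfolding X_def s_def sum_distrib_left[symmetric] sum_distrib_right[symmetric] by simp
    finally show ?thesis .
  qed
  have s2: "s^2 \<le> X * m"
    using sum_squared_le_sum_of_squares[of "\<lambda>i. \<bar>u$i\<bar>" UNIV] by (simp add: s_def X_def m_def)
  have B: "2 * e * s \<le> \<alpha> * X + m * e^2 / \<alpha>"
  proof -
    have "2 * e * s * (\<alpha> * m) \<le> \<alpha> * \<alpha> * s^2 + m * m * e^2"
      using zero_le_power2[of "\<alpha> * s - m * e"] by (simp add: power2_eq_square algebra_simps)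
    also have "\<dots> \<le> \<alpha> * \<alpha> * (X * m) + m * m * e^2"
      using s2 al by (intro add_right_mono mult_left_mono) auto
    finally have "2 * e * s * (\<alpha> * m) \<le> \<alpha> * \<alpha> * (X * m) + m * m * e^2" .
    moreover have "\<alpha> * X + m * e^2 / \<alpha> = (\<alpha> * \<alpha> * (X * m) + m * m * e^2) / (\<alpha> * m)"
      using al m1 by (simp add: field_simps power2_eq_square)
    ultimately show ?thesis using al m1 by (simp add: le_divide_eq)
  qed
  have g2: "g^2 \<le> m * gsq * X"
  proof -
    have "g^2 \<le> (\<Sum>i\<in>UNIV. (\<gamma>$i)^2) * X"
      unfolding g_def X_def by (rule Cauchy_Schwarz_ineq_sum)
    also have "\<dots> \<le> (m * gsq) * X"
    proof (intro mult_right_mono X0)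
      show "(\<Sum>i\<in>UNIV. (\<gamma>$i)^2) \<le> m * gsq"
        using sum_bounded_above[of UNIV "\<lambda>i. (\<gamma>$i)^2" gsq] gb by (simp add: m_def)
    qed
    finally show ?thesis by simp
  qed
  have Cr: "2 * \<rho> * FR \<le> - b * \<rho>^2 + m * gsq * X / b"
  proof -
    have "2 * \<rho> * g * b \<le> b * b * \<rho>^2 + g^2"
      using zero_le_power2[of "b * \<rho> - g"] by (simp add: power2_eq_square algebra_simps)
    then have "2 * \<rho> * g \<le> b * \<rho>^2 + g^2 / b"
      using b_pos by (simp add: field_simps power2_eq_square)
    also have "g^2 / b \<le> m * gsq * X / b" using g2 b_pos by (simp add: divide_right_mono)
    finally have "2 * \<rho> * g \<le> b * \<rho>^2 + m * gsq * X / b" by simp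
    then show ?thesis unfolding FRe by (simp add: algebra_simps power2_eq_square)
  qed
  have C1pos: "C1 > 0" unfolding C1_def using al b_pos m1 g0
    by (intro mult_pos_pos) (auto simp: \<alpha>_def intro!: add_nonneg_pos divide_nonneg_pos)
  have C1a: "C1 * \<alpha> = m * gsq / b + b" unfolding C1_def \<alpha>_def using al by (simp add: \<alpha>_def)
  have C2e: "C2 = C1 * (m * e^2 / \<alpha>)" unfolding C2_def C1_def e_def \<alpha>_def using al
    by (simp add: \<alpha>_def power2_eq_square field_simps)
  have main: "2 * C1 * (fst x \<bullet> FU) + 2 * \<rho> * FR \<le> - b * X - b * \<rho>^2 + C2"
  proof -
    have "2 * C1 * (fst x \<bullet> FU) \<le> 2 * C1 * (- \<alpha> * X + e * s)"
      using A C1pos by (intro mult_left_mono) auto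
    also have "\<dots> = - 2 * C1 * \<alpha> * X + C1 * (2 * e * s)" by (simp add: algebra_simps)
    also have "\<dots> \<le> - 2 * C1 * \<alpha> * X + C1 * (\<alpha> * X + m * e^2 / \<alpha>)"
      using B C1pos by (intro add_left_mono mult_left_mono) auto
    also have "\<dots> = - (C1 * \<alpha>) * X + C1 * (m * e^2 / \<alpha>)" by (simp add: algebra_simps)
    finally have "2 * C1 * (fst x \<bullet> FU) \<le> - (m * gsq / b + b) * X + C2" unfolding C1a C2e .
    then show ?thesis using Cr b_pos by (simp add: algebra_simps add_divide_distrib)
  qed
  have uu: "fst x \<bullet> fst x = X" by (simp add: x X_def inner_vec_def power2_eq_square)
  have mu_le: "\<mu> * (C1 * X + \<rho> * \<rho>) \<le> b * X + b * \<rho>^2"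
  proof -
    have q1: "min (1 / C1) 1 * C1 \<le> 1" using C1pos by (auto simp: min_def field_simps)
    have q2: "min (1 / C1) 1 \<le> 1" by simp
    have q0: "min (1 / C1) 1 \<ge> 0" using C1pos by simp
    have "\<mu> * (C1 * X + \<rho> * \<rho>) = b * ((min (1 / C1) 1 * C1) * X + min (1 / C1) 1 * \<rho>^2)"
      unfolding mu_def by (simp add: algebra_simps power2_eq_square)
    also have "\<dots> \<le> b * (1 * X + 1 * \<rho>^2)"
      using q1 q2 X0 b_pos by (intro mult_left_mono add_mono mult_right_mono) auto
    finally show ?thesis by (simp add: algebra_simps)
  qed
  show ?thesis
    using main mu_le unfolding FU_def[symmetric] FR_def[symmetric] uu by (simp add: x)
qed


theorem theorem2p2:
  fixes a :: "real^'n::finite" and w :: "real^'n^'n"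
    and f \<phi> :: "'n \<Rightarrow> real \<Rightarrow> real"
    and J \<gamma> \<eta> :: "real^'n"
    and k b \<beta> P r V :: real
  assumes m2: "CARD('n) \<ge> 2"
    and r_pos: "r > 0" and P_pos: "P > 0"
    and a_pos: "\<forall>i. a$i > 0" and b_pos: "b > 0" and beta_pos: "\<beta> > 0"
    and eta_pos: "\<forall>i. \<eta>$i > 0" and k_pos: "k > 0"
    and f_lip: "\<forall>i. loc_lipschitz (f i)" and phi_lip: "\<forall>i. loc_lipschitz (\<phi> i)"
    and a_gt_k: "\<forall>i. a$i > k"
    and f_bd: "\<forall>i s. \<bar>f i s\<bar> \<le> \<beta>"
    and phi_def: "\<forall>i s. \<phi> i s = 1 - \<eta>$i * s^2"
  defines "F \<equiv> nn_field a w f k \<phi> J P r V \<gamma> b"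
    and "m \<equiv> real CARD('n)"
    and "amin \<equiv> Min (range (\<lambda>i. a$i))"
    and "W \<equiv> Max {\<bar>w$i$j\<bar> | i j. True}"
    and "Jm \<equiv> Max (range (\<lambda>i. \<bar>J$i\<bar>))"
    and "gsq \<equiv> Max (range (\<lambda>i. (\<gamma>$i)^2))"
  shows "let C1 = (1 / (amin - k)) * (m * gsq / b + b);
              C2 = (m * gsq / b + b) * (m * (m * W * \<beta> + Jm)^2 / (amin - k)^2);
              \<mu> = b * min (1 / C1) 1;
              Q = 1 + C2 / (\<mu> * min C1 1);
              Bstar = {g :: (real^'n) \<times> real. (norm g)^2 \<le> Q}
         in (\<forall>x0. \<exists>g. is_solution F x0 g)
       \<and> (\<forall>x0 g1 g2. is_solution F x0 g1 \<longrightarrow> is_solution F x0 g2 \<longrightarrow> (\<forall>t\<ge>0. g1 t = g2 t))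
       \<and> (\<forall>B. bounded B \<longrightarrow> (\<exists>T\<ge>0. \<forall>t>T. semiflow F t ` B \<subseteq> Bstar))
       \<and> (\<exists>A. global_attractor (semiflow F) A)"
proof -
  have finA: "finite (range (\<lambda>i. a$i))" by simp
  have amin_le: "\<forall>i. amin \<le> a$i" unfolding amin_def using finA by (auto intro: Min_le)
  have "amin \<in> range (\<lambda>i. a$i)" unfolding amin_def by (rule Min_in) auto
  then have amin_gt: "amin > k" using a_gt_k by auto
  have Wset: "{\<bar>w$i$j\<bar> | i j. True} = (\<lambda>(i, j). \<bar>w$i$j\<bar>) ` UNIV" by auto
  have Wb: "\<forall>i j. \<bar>w$i$j\<bar> \<le> W"
  proof (intro allI)
    fix i j
    have "\<bar>w$i$j\<bar> \<in> (\<lambda>(i, j). \<bar>w$i$j\<bar>) ` UNIV" by (rule image_eqI[of _ _ "(i, j)"]) auto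
    then show "\<bar>w$i$j\<bar> \<le> W" unfolding W_def Wset by (intro Max_ge) auto
  qed
  have W0: "W \<ge> 0" using Wb by (meson abs_ge_zero order_trans)
  have Jb: "\<forall>i. \<bar>J$i\<bar> \<le> Jm" unfolding Jm_def by (auto intro: Max_ge)
  have J0: "Jm \<ge> 0" using Jb by (meson abs_ge_zero order_trans)
  have gb: "\<forall>i. (\<gamma>$i)^2 \<le> gsq" unfolding gsq_def by (auto intro: Max_ge)
  have g0: "gsq \<ge> 0" using gb by (meson zero_le_power2 order_trans)
  have m1: "m \<ge> 1" unfolding m_def by simp
  define C1 where "C1 = (1 / (amin - k)) * (m * gsq / b + b)"
  define C2 where "C2 = (m * gsq / b + b) * (m * (m * W * \<beta> + Jm)^2 / (amin - k)^2)"
  define \<mu> where "\<mu> = b * min (1 / C1) 1"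
  have C1pos: "C1 > 0" unfolding C1_def using amin_gt b_pos m1 g0
    by (intro mult_pos_pos) (auto intro!: add_nonneg_pos divide_nonneg_pos)
  have C2nn: "C2 \<ge> 0" unfolding C2_def using b_pos m1 g0
    by (intro mult_nonneg_nonneg) (auto intro!: add_nonneg_nonneg divide_nonneg_pos)
  have mupos: "\<mu> > 0" unfolding \<mu>_def using b_pos C1pos by simp
  define Z where "Z g = C1 * (fst g \<bullet> fst g) + snd g * snd g" for g :: "(real^'n) \<times> real"
  define DZ where "DZ g h = 2 * C1 * (fst g \<bullet> fst h) + 2 * snd g * snd h" for g h :: "(real^'n) \<times> real"
  have normsq: "(norm x)^2 = fst x \<bullet> fst x + snd x * snd x" for x :: "(real^'n) \<times> real"
  proof (cases x)
    case (Pair u \<rho>)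
    have "(norm x)^2 = (norm u)^2 + (norm \<rho>)^2" unfolding Pair norm_Pair by simp
    also have "\<dots> = u \<bullet> u + \<rho> * \<rho>"
      using power2_norm_eq_inner[of u] by (simp add: power2_eq_square)
    finally show ?thesis using Pair by simp
  qed
  interpret D: dsys F Z DZ \<mu> C2 "min C1 1" "max C1 1"
  proof
    show "lipb F" unfolding F_def by (rule lipb_field[OF f_lip phi_lip])
    fix x :: "(real^'n) \<times> real"
    show "(Z has_derivative DZ x) (at x)"
      unfolding Z_def[abs_def] DZ_def
      by (auto intro!: derivative_eq_intros simp: inner_commute algebra_simps)
    show "DZ x (F x) \<le> - \<mu> * Z x + C2"
      unfolding DZ_def Z_def F_def
      by (rule diss[OF P_pos b_pos k_pos beta_pos f_bd phi_def eta_pos amin_le amin_gt Wb W0 Jb J0 gb g0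
            meta_eq_to_obj_eq[OF m_def] C1_def C2_def \<mu>_def])
    have uu: "fst x \<bullet> fst x \<ge> 0" by simp
    have rr: "snd x * snd x \<ge> 0" by simp
    have a1: "min C1 1 * (fst x \<bullet> fst x) \<le> C1 * (fst x \<bullet> fst x)" by (rule mult_right_mono[OF min.cobounded1 uu])
    have a2: "min C1 1 * (snd x * snd x) \<le> 1 * (snd x * snd x)" by (rule mult_right_mono[OF min.cobounded2 rr])
    have a3: "C1 * (fst x \<bullet> fst x) \<le> max C1 1 * (fst x \<bullet> fst x)" by (rule mult_right_mono[OF max.cobounded1 uu])
    have a4: "1 * (snd x * snd x) \<le> max C1 1 * (snd x * snd x)" by (rule mult_right_mono[OF max.cobounded2 rr])
    show "min C1 1 * (norm x)^2 \<le> Z x"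
      unfolding normsq Z_def distrib_left using a1 a2 by simp
    show "Z x \<le> max C1 1 * (norm x)^2"
      unfolding normsq Z_def distrib_left using a3 a4 by simp
  qed (use mupos C2nn C1pos in auto)
  have absorbing: "\<exists>T\<ge>0. \<forall>t>T. semiflow F t ` B \<subseteq> {g. (norm g)^2 \<le> 1 + C2 / (\<mu> * min C1 1)}"
    if B: "bounded B" for B :: "((real^'n) \<times> real) set"
  proof -
    have c1p: "min C1 1 > 0" using C1pos by simp
    obtain T where T: "T \<ge> 0" "\<And>t x. t \<ge> T \<Longrightarrow> x \<in> B \<Longrightarrow> Z (semiflow F t x) \<le> C2 / \<mu> + min C1 1"
      using D.absorb[OF B c1p] by blast
    have "semiflow F t ` B \<subseteq> {g. (norm g)^2 \<le> 1 + C2 / (\<mu> * min C1 1)}" if t: "t > T" for t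
    proof
      fix y assume "y \<in> semiflow F t ` B"
      then obtain x where x: "x \<in> B" "y = semiflow F t x" by blast
      have "min C1 1 * (norm y)^2 \<le> C2 / \<mu> + min C1 1"
        using D.Zlow[of y] T(2)[of t x] t x by auto
      then have "(norm y)^2 \<le> (C2 / \<mu> + min C1 1) / min C1 1"
        using c1p by (simp add: field_simps)
      also have "\<dots> = 1 + C2 / (\<mu> * min C1 1)" using c1p mupos by (simp add: field_simps)
      finally show "y \<in> {g. (norm g)^2 \<le> 1 + C2 / (\<mu> * min C1 1)}" by simp
    qed
    then show ?thesis using T(1) by blast
  qed
  show ?thesis
    unfolding Let_def C1_def[symmetric] C2_def[symmetric] \<mu>_def[symmetric]
  proof (intro conjI)
    show "\<forall>x0. \<exists>g. is_solution F x0 g" using D.existence by blast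
    show "\<forall>x0 g1 g2. is_solution F x0 g1 \<longrightarrow> is_solution F x0 g2 \<longrightarrow> (\<forall>t\<ge>0. g1 t = g2 t)"
      using D.uniqueness by blast
    show "\<forall>B. bounded B \<longrightarrow> (\<exists>T\<ge>0. \<forall>t>T. semiflow F t ` B \<subseteq> {g. (norm g)^2 \<le> 1 + C2 / (\<mu> * min C1 1)})"
      using absorbing by blast
    show "\<exists>A. global_attractor (semiflow F) A" using D.attractor by blast
  qed
qed


end
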